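(* The flow rewriting system $\mathsf c$ is terminating on the set of cycle-free atomic flows: there is no infinite chain $A_1\to_{\mathsf c}A_2\to_{\mathsf c}\cdots$ with $A_1$ cycle-free.
   Context: An atomic flow is a tuple $(V,E,\eta,up,lo)$: finite sets of vertices and edges, a labelling of vertices by interaction, cut, weakening, coweakening, contraction or cocontraction, and maps $up:E\to V\cup\{\top\}$, $lo:E\to V\cup\{\bot\}$. Upper edges of $\nu$: $lo(\epsilon)=\nu$; lower edges: $up(\epsilon)=\nu$. (Upper, lower) edge numbers: $(0,2)$ interaction, $(2,0)$ cut, $(0,1)$ weakening, $(1,0)$ coweakening, $(2,1)$ contraction, $(1,2)$ cocontraction; no directed cycles; there is $\pi:E\to\{+,-\}$ giving all edges of a (co)contraction the same sign and the two edges of an interaction/cut different signs. A path from $\nu$ to $\nu'$ is a sequence of edges $\epsilon_1,\dots,\epsilon_h$ with $lo(\epsilon_i)=up(\epsilon_{i+1})$, $up(\epsilon_1)=\nu$, $lo(\epsilon_h)=\nu'$; its reversal is a path from $\nu'$ to $\nu$. An $\mathsf{ai}$-path from $\nu$ to $\nu'$ is either a path from $\nu$ to $\nu'$ or a sequence $\epsilon_1,\dots,\epsilon_k,\epsilon_{k+1},\dots,\epsilon_h$ with $\epsilon_k\neq\epsilon_{k+1}$ such that, for some interaction or cut vertex $\nu''$, $\epsilon_1,\dots,\epsilon_k$ is an $\mathsf{ai}$-path from $\nu$ to $\nu''$ and $\epsilon_{k+1},\dots,\epsilon_h$ is an $\mathsf{ai}$-path from $\nu''$ to $\nu'$. An $\mathsf{ai}$-cycle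 is an $\mathsf{ai}$-path from a vertex to itself in which no edge appears twice. A flow is cycle-free if it has no $\mathsf{ai}$-cycle. $A\to_{\mathsf c}B$ means $B$ results from $A$ by one of these subgraph replacements: (c1) a contraction with upper edges $\epsilon_1,\epsilon_2$ whose lower edge is an upper edge of a cut with other upper edge $\epsilon_3$: replace by a new cocontraction with upper edge $\epsilon_3$ and new lower edges $\delta_1,\delta_2$, and two new cuts with upper edges $\{\epsilon_1,\delta_1\}$ and $\{\epsilon_2,\delta_2\}$; (c2) an interaction with lower edges $\epsilon_3,\epsilon_4$ where $\epsilon_4$ is the upper edge of a cocontraction with lower edges $\epsilon_1,\epsilon_2$: replace by a new contraction with lower edge $\epsilon_3$ and new upper edges $\delta_1,\delta_2$, and two new interactions with lower edges $\{\epsilon_1,\delta_1\}$ and $\{\epsilon_2,\delta_2\}$; (c3) a contraction with upper edges $\epsilon_1,\epsilon_2$ whose lower edge is the upper edge of a cocontraction with lower edges $\epsilon_3,\epsilon_4$: replace by cocontractions $\kappa_1,\kappa_2$ with upper edges $\epsilon_1,\epsilon_2$, contractions $\gamma_3,\gamma_4$ with lower edges $\epsilon_3,\epsilon_4$, and four new edges, one from each $\kappa_i$ to each $\gamma_j$. *)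

theory Defs
  imports Main
begin

datatype vlabel = Interaction | Cut | Weak | Coweak | Contr | Cocontr

(* Endpoints of edges: Top (for up), Bot (for lo), or a vertex *)
datatype node = Top | Bot | Vtx nat

(* A flow: vertices and edges are named by natural numbers (an infinite supply
   of names is needed so that rewriting can create fresh vertices/edges). *)
record flow =
  fV :: "nat set"
  fE :: "nat set"
  flab :: "nat \<Rightarrow> vlabel"
  fup :: "nat \<Rightarrow> node"
  flo :: "nat \<Rightarrow> node"

fun upper_count :: "vlabel \<Rightarrow> nat" where
  "upper_count Interaction = 0" | "upper_count Cut = 2" | "upper_count Weak = 0"
| "upper_count Coweak = 1" | "upper_count Contr = 2" | "upper_count Cocontr = 1"

fun lower_count :: "vlabel \<Rightarrow> nat" where
  "lower_count Interaction = 2" | "lower_count Cut = 0" | "lower_count Weak = 1"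
| "lower_count Coweak = 0" | "lower_count Contr = 1" | "lower_count Cocontr = 2"

definition incident :: "flow \<Rightarrow> nat \<Rightarrow> nat \<Rightarrow> bool" where
  "incident F e v \<longleftrightarrow> fup F e = Vtx v \<or> flo F e = Vtx v"

definition atomic_flow :: "flow \<Rightarrow> bool" where
  "atomic_flow F \<longleftrightarrow>
     finite (fV F) \<and> finite (fE F)
   \<and> (\<forall>e\<in>fE F. fup F e \<in> {Top} \<union> Vtx ` fV F \<and> flo F e \<in> {Bot} \<union> Vtx ` fV F)
   \<and> (\<forall>v\<in>fV F. card {e\<in>fE F. flo F e = Vtx v} = upper_count (flab F v)
               \<and> card {e\<in>fE F. fup F e = Vtx v} = lower_count (flab F v))
   \<and> acyclic {(v, w). \<exists>e\<in>fE F. fup F e = Vtx v \<and> flo F e = Vtx w}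
   \<and> (\<exists>\<pi> :: nat \<Rightarrow> bool. \<forall>v\<in>fV F.
        (flab F v \<in> {Contr, Cocontr} \<longrightarrow>
           (\<forall>e\<in>fE F. \<forall>e'\<in>fE F. incident F e v \<and> incident F e' v \<longrightarrow> \<pi> e = \<pi> e'))
      \<and> (flab F v \<in> {Interaction, Cut} \<longrightarrow>
           (\<forall>e\<in>fE F. \<forall>e'\<in>fE F. incident F e v \<and> incident F e' v \<and> e \<noteq> e' \<longrightarrow> \<pi> e \<noteq> \<pi> e')))"

definition dpath :: "flow \<Rightarrow> nat \<Rightarrow> nat \<Rightarrow> nat list \<Rightarrow> bool" where
  "dpath F v w es \<longleftrightarrow> es \<noteq> [] \<and> set es \<subseteq> fE F
     \<and> fup F (hd es) = Vtx v \<and> flo F (last es) = Vtx w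
     \<and> (\<forall>i. Suc i < length es \<longrightarrow> flo F (es ! i) = fup F (es ! Suc i))"

definition path :: "flow \<Rightarrow> nat \<Rightarrow> nat \<Rightarrow> nat list \<Rightarrow> bool" where
  "path F v w es \<longleftrightarrow> dpath F v w es \<or> dpath F w v (rev es)"

inductive ai_path :: "flow \<Rightarrow> nat \<Rightarrow> nat \<Rightarrow> nat list \<Rightarrow> bool" for F where
  ai_base: "path F v w es \<Longrightarrow> ai_path F v w es"
| ai_join: "\<lbrakk> ai_path F v u xs; ai_path F u w ys; u \<in> fV F;
              flab F u \<in> {Interaction, Cut}; last xs \<noteq> hd ys \<rbrakk>
            \<Longrightarrow> ai_path F v w (xs @ ys)"

definition ai_cycle :: "flow \<Rightarrow> nat \<Rightarrow> nat list \<Rightarrow> bool" where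
  "ai_cycle F v es \<longleftrightarrow> v \<in> fV F \<and> ai_path F v v es \<and> distinct es"

definition cycle_free :: "flow \<Rightarrow> bool" where
  "cycle_free F \<longleftrightarrow> \<not> (\<exists>v es. ai_cycle F v es)"

definition agrees :: "flow \<Rightarrow> nat set \<Rightarrow> nat set \<Rightarrow> (nat \<Rightarrow> vlabel)
    \<Rightarrow> (nat \<Rightarrow> node) \<Rightarrow> (nat \<Rightarrow> node) \<Rightarrow> bool" where
  "agrees B V E l u d \<longleftrightarrow> fV B = V \<and> fE B = E \<and> (\<forall>v\<in>V. flab B v = l v)
     \<and> (\<forall>e\<in>E. fup B e = u e \<and> flo B e = d e)"

definition c1_step :: "flow \<Rightarrow> flow \<Rightarrow> bool" where
  "c1_step A B \<longleftrightarrow> (\<exists>g k e1 e2 e e3 n k1 k2 d1 d2.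
     g \<in> fV A \<and> flab A g = Contr \<and> k \<in> fV A \<and> flab A k = Cut
   \<and> e1 \<in> fE A \<and> e2 \<in> fE A \<and> e \<in> fE A \<and> e3 \<in> fE A \<and> e1 \<noteq> e2
   \<and> flo A e1 = Vtx g \<and> flo A e2 = Vtx g \<and> fup A e = Vtx g \<and> flo A e = Vtx k
   \<and> flo A e3 = Vtx k \<and> e3 \<noteq> e
   \<and> n \<notin> fV A \<and> k1 \<notin> fV A \<and> k2 \<notin> fV A \<and> distinct [n, k1, k2]
   \<and> d1 \<notin> fE A \<and> d2 \<notin> fE A \<and> d1 \<noteq> d2
   \<and> agrees B ((fV A - {g, k}) \<union> {n, k1, k2}) ((fE A - {e}) \<union> {d1, d2})
       ((flab A)(n := Cocontr, k1 := Cut, k2 := Cut))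
       ((fup A)(d1 := Vtx n, d2 := Vtx n))
       ((flo A)(e1 := Vtx k1, e2 := Vtx k2, e3 := Vtx n, d1 := Vtx k1, d2 := Vtx k2)))"

definition c2_step :: "flow \<Rightarrow> flow \<Rightarrow> bool" where
  "c2_step A B \<longleftrightarrow> (\<exists>i k e1 e2 e3 e4 g i1 i2 d1 d2.
     i \<in> fV A \<and> flab A i = Interaction \<and> k \<in> fV A \<and> flab A k = Cocontr
   \<and> e1 \<in> fE A \<and> e2 \<in> fE A \<and> e3 \<in> fE A \<and> e4 \<in> fE A
   \<and> fup A e3 = Vtx i \<and> fup A e4 = Vtx i \<and> e3 \<noteq> e4 \<and> flo A e4 = Vtx k
   \<and> fup A e1 = Vtx k \<and> fup A e2 = Vtx k \<and> e1 \<noteq> e2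
   \<and> g \<notin> fV A \<and> i1 \<notin> fV A \<and> i2 \<notin> fV A \<and> distinct [g, i1, i2]
   \<and> d1 \<notin> fE A \<and> d2 \<notin> fE A \<and> d1 \<noteq> d2
   \<and> agrees B ((fV A - {i, k}) \<union> {g, i1, i2}) ((fE A - {e4}) \<union> {d1, d2})
       ((flab A)(g := Contr, i1 := Interaction, i2 := Interaction))
       ((fup A)(e3 := Vtx g, e1 := Vtx i1, e2 := Vtx i2, d1 := Vtx i1, d2 := Vtx i2))
       ((flo A)(d1 := Vtx g, d2 := Vtx g)))"

definition c3_step :: "flow \<Rightarrow> flow \<Rightarrow> bool" where
  "c3_step A B \<longleftrightarrow> (\<exists>g k e1 e2 e e3 e4 k1 k2 g3 g4 f13 f14 f23 f24.
     g \<in> fV A \<and> flab A g = Contr \<and> k \<in> fV A \<and> flab A k = Cocontr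
   \<and> e1 \<in> fE A \<and> e2 \<in> fE A \<and> e \<in> fE A \<and> e3 \<in> fE A \<and> e4 \<in> fE A
   \<and> flo A e1 = Vtx g \<and> flo A e2 = Vtx g \<and> e1 \<noteq> e2
   \<and> fup A e = Vtx g \<and> flo A e = Vtx k
   \<and> fup A e3 = Vtx k \<and> fup A e4 = Vtx k \<and> e3 \<noteq> e4
   \<and> k1 \<notin> fV A \<and> k2 \<notin> fV A \<and> g3 \<notin> fV A \<and> g4 \<notin> fV A \<and> distinct [k1, k2, g3, g4]
   \<and> f13 \<notin> fE A \<and> f14 \<notin> fE A \<and> f23 \<notin> fE A \<and> f24 \<notin> fE A \<and> distinct [f13, f14, f23, f24]
   \<and> agrees B ((fV A - {g, k}) \<union> {k1, k2, g3, g4}) ((fE A - {e}) \<union> {f13, f14, f23, f24})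
       ((flab A)(k1 := Cocontr, k2 := Cocontr, g3 := Contr, g4 := Contr))
       ((fup A)(e3 := Vtx g3, e4 := Vtx g4, f13 := Vtx k1, f14 := Vtx k1,
                f23 := Vtx k2, f24 := Vtx k2))
       ((flo A)(e1 := Vtx k1, e2 := Vtx k2, f13 := Vtx g3, f14 := Vtx g4,
                f23 := Vtx g3, f24 := Vtx g4)))"

definition c_step :: "flow \<Rightarrow> flow \<Rightarrow> bool" where
  "c_step A B \<longleftrightarrow> c1_step A B \<or> c2_step A B \<or> c3_step A B"

end

theory Submission
  imports Defs "HOL-Library.Multiset"
begin

definition OE :: "flow \<Rightarrow> (nat \<times> bool) set" where "OE F = fE F \<times> UNIV"

fun src :: "flow \<Rightarrow> nat \<times> bool \<Rightarrow> node" where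
  "src F (e,d) = (if d then fup F e else flo F e)"
fun tgt :: "flow \<Rightarrow> nat \<times> bool \<Rightarrow> node" where
  "tgt F (e,d) = (if d then flo F e else fup F e)"

definition okt :: "vlabel \<Rightarrow> nat \<times> bool \<Rightarrow> nat \<times> bool \<Rightarrow> bool" where
  "okt l x y \<longleftrightarrow> ((l = Cut \<or> l = Interaction) \<and> snd x \<noteq> snd y \<and> fst x \<noteq> fst y)
     \<or> ((l = Contr \<or> l = Cocontr) \<and> snd x = snd y)"

definition tr :: "flow \<Rightarrow> nat \<times> bool \<Rightarrow> nat \<times> bool \<Rightarrow> bool" where
  "tr F x y \<longleftrightarrow> fst x \<in> fE F \<and> fst y \<in> fE F \<and>
     (\<exists>v\<in>fV F. tgt F x = Vtx v \<and> src F y = Vtx v \<and> okt (flab F v) x y)"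

fun vof :: "node \<Rightarrow> nat" where "vof (Vtx v) = v" | "vof _ = 0"

definition ttyp :: "flow \<Rightarrow> nat \<times> bool \<Rightarrow> nat \<times> bool \<Rightarrow> nat" where
  "ttyp F x y = (case flab F (vof (tgt F x)) of Cut \<Rightarrow> 1 | Interaction \<Rightarrow> 1
      | Contr \<Rightarrow> (if snd x then 2 else 0) | Cocontr \<Rightarrow> (if snd x then 0 else 2) | _ \<Rightarrow> 0)"

fun tw :: "flow \<Rightarrow> (nat \<times> bool) list \<Rightarrow> nat list" where
  "tw F (x # y # r) = ttyp F x y # tw F (y # r)"
| "tw F _ = []"

fun ninv :: "nat list \<Rightarrow> nat" where
  "ninv [] = 0"
| "ninv (a # l) = length (filter (\<lambda>b. b < a) l) + ninv l"

definition walk :: "flow \<Rightarrow> (nat \<times> bool) list \<Rightarrow> bool" where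
  "walk F w \<longleftrightarrow> w \<noteq> [] \<and> set w \<subseteq> OE F \<and> successively (tr F) w"

definition NC :: "flow \<Rightarrow> bool" where
  "NC F \<longleftrightarrow> \<not> (\<exists>w v. walk F w \<and> src F (hd w) = Vtx v \<and> tgt F (last w) = Vtx v)"

definition maxw :: "flow \<Rightarrow> (nat \<times> bool) list \<Rightarrow> bool" where
  "maxw F w \<longleftrightarrow> walk F w \<and> (\<forall>y. \<not> tr F y (hd w)) \<and> (\<forall>y. \<not> tr F (last w) y)"

definition M :: "flow \<Rightarrow> nat" where
  "M F = (\<Sum>w\<in>{w. maxw F w}. ninv (tw F w))"

lemma tr_OE: "tr F x y \<Longrightarrow> x \<in> OE F \<and> y \<in> OE F"
  by (cases x; cases y) (auto simp: tr_def OE_def)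

lemma tr_tgt_src: "tr F x y \<Longrightarrow> \<exists>v. tgt F x = Vtx v \<and> src F y = Vtx v"
  by (auto simp: tr_def)

lemma walk_sub:
  assumes "walk F w" "i < j" "j \<le> length w"
  shows "walk F (take (j - i) (drop i w))"
proof -
  have "w = take i w @ take (j-i) (drop i w) @ drop j w"
    using assms by (metis append.assoc append_take_drop_id le_add_diff_inverse less_imp_le_nat take_add)
  then have "successively (tr F) (take (j - i) (drop i w))"
    using assms(1) unfolding walk_def by (metis successively_append_iff)
  moreover have "set (take (j - i) (drop i w)) \<subseteq> OE F"
    using assms(1) unfolding walk_def by (meson in_set_dropD in_set_takeD subset_iff)
  moreover have "take (j - i) (drop i w) \<noteq> []" using assms by simp
  ultimately show ?thesis by (simp add: walk_def)
qed

lemma walk_nth_tr: "walk F w \<Longrightarrow> Suc i < length w \<Longrightarrow> tr F (w!i) (w!Suc i)"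
  unfolding walk_def using successively_nth by blast

lemma NC_distinct:
  assumes "NC F" "walk F w" shows "distinct w"
proof (rule ccontr)
  assume "\<not> distinct w"
  then obtain i j where ij: "i < j" "j < length w" "w!i = w!j"
    by (metis distinct_conv_nth linorder_neqE_nat)
  let ?s = "take (j - i) (drop i w)"
  have ws: "walk F ?s" using walk_sub[OF assms(2) ij(1)] ij by simp
  have hd: "hd ?s = w!i" using ij by (simp add: hd_take hd_drop_conv_nth)
  have lst: "last ?s = w!(j-1)"
  proof -
    have "?s \<noteq> []" using ij by simp
    then have "last ?s = ?s ! (length ?s - 1)" by (simp add: last_conv_nth)
    also have "length ?s = j - i" using ij by simp
    also have "?s ! (j - i - 1) = w ! (j - 1)" using ij by (simp add: nth_take nth_drop)
    finally show ?thesis .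
  qed
  have "tr F (w!(j-1)) (w!j)" using walk_nth_tr[OF assms(2), of "j-1"] ij by simp
  then obtain v where "tgt F (w!(j-1)) = Vtx v" "src F (w!j) = Vtx v"
    using tr_tgt_src by blast
  then show False using assms(1) ws hd lst ij(3) unfolding NC_def by metis
qed

lemma finite_OE: "finite (fE F) \<Longrightarrow> finite (OE F)"
  by (simp add: OE_def)

lemma finite_walks:
  assumes "NC F" "finite (fE F)" shows "finite {w. walk F w}"
proof -
  have "{w. walk F w} \<subseteq> {xs. set xs \<subseteq> OE F \<and> distinct xs}"
    using NC_distinct[OF assms(1)] by (auto simp: walk_def)
  then show ?thesis using finite_subset_distinct[OF finite_OE[OF assms(2)]] finite_subset by blast
qed

lemma finite_maxw:
  assumes "NC F" "finite (fE F)" shows "finite {w. maxw F w}"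
  using finite_walks[OF assms] by (rule rev_finite_subset) (auto simp: maxw_def)

lemma exists_maxw:
  assumes "NC F" "finite (fE F)" "x \<in> OE F"
  shows "\<exists>w. maxw F w \<and> x \<in> set w"
proof -
  let ?S = "{w. walk F w \<and> x \<in> set w}"
  have fin: "finite ?S" using finite_walks[OF assms(1,2)] by (rule rev_finite_subset) auto
  have ne: "[x] \<in> ?S" using assms(3) by (simp add: walk_def)
  define m where "m = Max (length ` ?S)"
  have "m \<in> length ` ?S" unfolding m_def using fin ne by (intro Max_in) auto
  then obtain w where w: "w \<in> ?S" "length w = m" by auto
  have big: "\<And>w'. w' \<in> ?S \<Longrightarrow> length w' \<le> m" unfolding m_def using fin by auto
  have "\<forall>y. \<not> tr F y (hd w)"
  proof (intro allI notI)
    fix y assume t: "tr F y (hd w)"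
    have "walk F (y # w)" using w t tr_OE[OF t]
      by (auto simp: walk_def successively_Cons)
    then have "y # w \<in> ?S" using w by auto
    then show False using big w by fastforce
  qed
  moreover have "\<forall>y. \<not> tr F (last w) y"
  proof (intro allI notI)
    fix y assume t: "tr F (last w) y"
    have "walk F (w @ [y])" using w t tr_OE[OF t]
      by (auto simp: walk_def successively_append_iff)
    then have "w @ [y] \<in> ?S" using w by auto
    then show False using big w by fastforce
  qed
  ultimately show ?thesis using w by (auto simp: maxw_def)
qed

lemma len_filter_mset: "mset l = mset l' \<Longrightarrow> length (filter P l) = length (filter P l')"
  by (metis mset_filter size_mset)

lemma map_walk_hd_last: "w \<noteq> [] \<Longrightarrow> hd (map f w) = f (hd w) \<and> last (map f w) = f (last w)"
  by (simp add: hd_map last_map)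

locale sim =
  fixes A B :: flow and \<phi> :: "nat \<times> bool \<Rightarrow> nat \<times> bool" and \<psi> :: "node \<Rightarrow> node"
    and R :: "(nat \<times> bool) set"
  assumes finA: "finite (fE A)" and finB: "finite (fE B)" and ncA: "NC A"
  and A1: "\<And>x. x \<in> OE B \<Longrightarrow> \<phi> x \<in> OE A"
  and A2: "\<And>x y. tr B x y \<Longrightarrow> tr A (\<phi> x) (\<phi> y)"
  and A3: "\<And>x. x \<in> OE B \<Longrightarrow> src A (\<phi> x) = \<psi> (src B x) \<and> tgt A (\<phi> x) = \<psi> (tgt B x)"
  and A4: "\<And>v. \<exists>u. \<psi> (Vtx v) = Vtx u"
  and A5: "R \<subseteq> OE B" "R \<noteq> {}"
  and A6: "\<And>x. x \<in> R \<Longrightarrow> (\<exists>p. tr B p x) \<and> (\<exists>s. tr B x s)"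
  and A7: "\<And>x y. x \<in> OE B \<Longrightarrow> y \<in> OE B \<Longrightarrow> x \<noteq> y \<Longrightarrow> \<phi> x = \<phi> y \<Longrightarrow> x \<in> R \<and> y \<in> R"
  and A8: "\<And>x x' p p' s s'. x \<in> R \<Longrightarrow> x' \<in> R \<Longrightarrow> \<phi> x = \<phi> x' \<Longrightarrow> tr B p x \<Longrightarrow> tr B p' x'
            \<Longrightarrow> tr B x s \<Longrightarrow> tr B x' s' \<Longrightarrow> \<phi> p = \<phi> p' \<Longrightarrow> \<phi> s = \<phi> s' \<Longrightarrow> x = x'"
  and A9: "\<And>x y. x \<in> OE B \<Longrightarrow> x \<notin> R \<Longrightarrow> tr A y (\<phi> x) \<Longrightarrow> \<exists>y'. tr B y' x"
  and A9': "\<And>x y. x \<in> OE B \<Longrightarrow> x \<notin> R \<Longrightarrow> tr A (\<phi> x) y \<Longrightarrow> \<exists>y'. tr B x y'"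
  and A10: "\<And>x y. tr B x y \<Longrightarrow> x \<notin> R \<Longrightarrow> y \<notin> R \<Longrightarrow> ttyp A (\<phi> x) (\<phi> y) = ttyp B x y"
  and A11: "\<And>x p s. x \<in> R \<Longrightarrow> tr B p x \<Longrightarrow> tr B x s \<Longrightarrow>
     p \<notin> R \<and> s \<notin> R \<and> ttyp B p x < ttyp B x s \<and> ttyp A (\<phi> p) (\<phi> x) = ttyp B x s
     \<and> ttyp A (\<phi> x) (\<phi> s) = ttyp B p x"
begin

lemma walk_map: "walk B w \<Longrightarrow> walk A (map \<phi> w)"
  unfolding walk_def successively_map using A1 A2
  by (auto elim: successively_mono)

lemma ncB: "NC B"
  unfolding NC_def
proof
  assume "\<exists>w v. walk B w \<and> src B (hd w) = Vtx v \<and> tgt B (last w) = Vtx v"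
  then obtain w v where w: "walk B w" "src B (hd w) = Vtx v" "tgt B (last w) = Vtx v" by blast
  obtain u where u: "\<psi> (Vtx v) = Vtx u" using A4 by blast
  have ne: "w \<noteq> []" and sub: "set w \<subseteq> OE B" using w by (auto simp: walk_def)
  have "hd w \<in> OE B" "last w \<in> OE B" using ne sub by auto
  then have "src A (hd (map \<phi> w)) = Vtx u" "tgt A (last (map \<phi> w)) = Vtx u"
    using A3 w u ne by (auto simp: hd_map last_map)
  then show False using ncA walk_map[OF w(1)] unfolding NC_def by blast
qed

lemma maxw_ends: "maxw B w \<Longrightarrow> hd w \<notin> R \<and> last w \<notin> R"
  unfolding maxw_def by (metis A6)

lemma maxw_map: assumes "maxw B w" shows "maxw A (map \<phi> w)"
proof -
  have w: "walk B w" and ne: "w \<noteq> []" and sub: "set w \<subseteq> OE B"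
    using assms by (auto simp: maxw_def walk_def)
  have h: "hd w \<in> OE B" "last w \<in> OE B" using ne sub by auto
  have e: "hd w \<notin> R" "last w \<notin> R" using maxw_ends[OF assms] by auto
  have "\<forall>y. \<not> tr A y (hd (map \<phi> w))"
    using A9[OF h(1) e(1)] assms ne by (auto simp: maxw_def hd_map)
  moreover have "\<forall>y. \<not> tr A (last (map \<phi> w)) y"
    using A9'[OF h(2) e(2)] assms ne by (auto simp: maxw_def last_map)
  ultimately show ?thesis using walk_map[OF w] by (simp add: maxw_def)
qed

lemma inj_maxw: "inj_on (map \<phi>) {w. maxw B w}"
proof (rule inj_onI)
  fix w w' assume a: "w \<in> {w. maxw B w}" "w' \<in> {w. maxw B w}" and eq: "map \<phi> w = map \<phi> w'"
  have len: "length w = length w'" using eq by (metis length_map)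
  have mw: "maxw B w" "maxw B w'" using a by auto
  have sub: "set w \<subseteq> OE B" "set w' \<subseteq> OE B" using mw by (auto simp: maxw_def walk_def)
  have ne: "w \<noteq> []" using mw by (auto simp: maxw_def walk_def)
  show "w = w'"
  proof (rule nth_equalityI[OF len], rule ccontr)
    fix i assume i: "i < length w" and neq: "w ! i \<noteq> w' ! i"
    have phieq: "\<And>j. j < length w \<Longrightarrow> \<phi> (w!j) = \<phi> (w'!j)"
      using eq len by (metis nth_map)
    have oe: "w!i \<in> OE B" "w'!i \<in> OE B" using sub i len nth_mem by (metis subsetD)+
    have inR: "w!i \<in> R" "w'!i \<in> R"
      using A7[OF oe neq phieq[OF i]] by auto
    have i0: "i \<noteq> 0"
      using maxw_ends[OF mw(1)] maxw_ends[OF mw(2)] inR ne len by (metis hd_conv_nth)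
    have il: "Suc i \<noteq> length w"
    proof
      assume "Suc i = length w"
      then have "last w = w!i" "last w' = w'!i" using len ne
        by (metis diff_Suc_1 last_conv_nth, metis diff_Suc_1 last_conv_nth list.size(3) nat.distinct(1))
      then show False using maxw_ends[OF mw(1)] inR by auto
    qed
    have wk: "walk B w" "walk B w'" using mw by (auto simp: maxw_def)
    have t1: "tr B (w!(i-1)) (w!i)" "tr B (w'!(i-1)) (w'!i)"
      using walk_nth_tr[OF wk(1), of "i-1"] walk_nth_tr[OF wk(2), of "i-1"] i i0 len by auto
    have t2: "tr B (w!i) (w!Suc i)" "tr B (w'!i) (w'!Suc i)"
      using walk_nth_tr[OF wk(1), of "i"] walk_nth_tr[OF wk(2), of "i"] i il len by auto
    have "w!i = w'!i"
      using A8[OF inR phieq[OF i] t1 t2] phieq i il by simp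
    then show False using neq by simp
  qed
qed

lemma tw_le:
  "walk B w \<Longrightarrow> hd w \<notin> R \<Longrightarrow> last w \<notin> R \<Longrightarrow>
   mset (tw B w) = mset (tw A (map \<phi> w)) \<and>
   ninv (tw B w) + (if set w \<inter> R \<noteq> {} then 1 else 0) \<le> ninv (tw A (map \<phi> w))"
proof (induction "length w" arbitrary: w rule: less_induct)
  case less
  show ?case
  proof (cases w)
    case Nil then show ?thesis using less by (simp add: walk_def)
  next
    case (Cons x r)
    show ?thesis
    proof (cases r)
      case Nil then show ?thesis using Cons less by auto
    next
      case (Cons y r')
      note w = \<open>w = x # r\<close> Cons
      have txy: "tr B x y" using less(2) w by (simp add: walk_def)
      have wr: "walk B (y # r')" using less(2) w by (auto simp: walk_def)
      have xR: "x \<notin> R" using less(3) w by simp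
      show ?thesis
      proof (cases "y \<in> R")
        case False
        have IH: "mset (tw B (y # r')) = mset (tw A (map \<phi> (y # r'))) \<and>
          ninv (tw B (y # r')) + (if set (y # r') \<inter> R \<noteq> {} then 1 else 0) \<le> ninv (tw A (map \<phi> (y # r')))"
          using less(1)[of "y # r'"] wr less(4) w False by auto
        have ty: "ttyp A (\<phi> x) (\<phi> y) = ttyp B x y" using A10[OF txy xR False] .
        have fl: "length (filter (\<lambda>b. b < ttyp B x y) (tw B (y # r'))) =
                  length (filter (\<lambda>b. b < ttyp B x y) (tw A (map \<phi> (y # r'))))"
          using IH len_filter_mset by blast
        have e1: "tw B w = ttyp B x y # tw B (y # r')" using w by simp
        have e2: "tw A (map \<phi> w) = ttyp B x y # tw A (map \<phi> (y # r'))" using w ty by simp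
        have s1: "set w \<inter> R = set (y # r') \<inter> R" using w xR by auto
        show ?thesis unfolding e1 e2 s1 using IH fl by simp
      next
        case True
        have r'ne: "r' \<noteq> []"
        proof
          assume "r' = []" then have "last w = y" using w by simp
          then show False using less(4) True by simp
        qed
        then obtain z r'' where r': "r' = z # r''" by (cases r') auto
        have tyz: "tr B y z" using wr r' by (simp add: walk_def)
        have key: "x \<notin> R \<and> z \<notin> R \<and> ttyp B x y < ttyp B y z \<and> ttyp A (\<phi> x) (\<phi> y) = ttyp B y z
           \<and> ttyp A (\<phi> y) (\<phi> z) = ttyp B x y" using A11[OF True txy tyz] by blast
        have wz: "walk B (z # r'')" using wr r' by (auto simp: walk_def)
        have lz: "last (z # r'') = last w" using w r' by simp
        have IH: "mset (tw B (z # r'')) = mset (tw A (map \<phi> (z # r''))) \<and>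
          ninv (tw B (z # r'')) \<le> ninv (tw A (map \<phi> (z # r'')))"
          using less(1)[of "z # r''"] wz less(4) w r' key lz by fastforce
        define a where "a = ttyp B x y"
        define b where "b = ttyp B y z"
        define lB where "lB = tw B (z # r'')"
        define lA where "lA = tw A (map \<phi> (z # r''))"
        have eqB: "tw B w = a # b # lB" using w r' by (simp add: a_def b_def lB_def)
        have eqA: "tw A (map \<phi> w) = b # a # lA" using w r' key by (simp add: a_def b_def lA_def)
        have ab: "a < b" using key by (simp add: a_def b_def)
        have ms: "mset lB = mset lA" and il: "ninv lB \<le> ninv lA" using IH by (auto simp: lA_def lB_def)
        have f1: "length (filter (\<lambda>c. c < a) lB) = length (filter (\<lambda>c. c < a) lA)"
          using len_filter_mset[OF ms] .
        have f2: "length (filter (\<lambda>c. c < b) lB) = length (filter (\<lambda>c. c < b) lA)"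
          using len_filter_mset[OF ms] .
        have "ninv (tw B w) + 1 \<le> ninv (tw A (map \<phi> w))"
          using eqA eqB ab f1 f2 il by simp
        moreover have "mset (tw B w) = mset (tw A (map \<phi> w))" using eqA eqB ms by simp
        ultimately show ?thesis by auto
      qed
    qed
  qed
qed

lemma M_less: "M B < M A"
proof -
  let ?SB = "{w. maxw B w}" and ?SA = "{w. maxw A w}"
  have fB: "finite ?SB" using finite_maxw[OF ncB finB] .
  have fA: "finite ?SA" using finite_maxw[OF ncA finA] .
  obtain x where x: "x \<in> R" using A5 by blast
  obtain w0 where w0: "maxw B w0" "x \<in> set w0" using exists_maxw[OF ncB finB, of x] x A5 by blast
  have le: "\<And>w. w \<in> ?SB \<Longrightarrow> ninv (tw B w) + (if set w \<inter> R \<noteq> {} then 1 else 0) \<le> ninv (tw A (map \<phi> w))"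
    using tw_le maxw_ends by (auto simp: maxw_def)
  have "M B = (\<Sum>w\<in>?SB. ninv (tw B w))" by (simp add: M_def)
  also have "\<dots> < (\<Sum>w\<in>?SB. ninv (tw A (map \<phi> w)))"
  proof (rule sum_strict_mono_ex1[OF fB])
    show "\<forall>w\<in>?SB. ninv (tw B w) \<le> ninv (tw A (map \<phi> w))" using le by fastforce
    show "\<exists>w\<in>?SB. ninv (tw B w) < ninv (tw A (map \<phi> w))"
    proof (intro bexI[of _ w0])
      have "set w0 \<inter> R \<noteq> {}" using w0 x by auto
      then show "ninv (tw B w0) < ninv (tw A (map \<phi> w0))" using le[of w0] w0 by simp
    qed (use w0 in simp)
  qed
  also have "\<dots> = (\<Sum>w\<in>map \<phi> ` ?SB. ninv (tw A w))"
    using sum.reindex[OF inj_maxw, of "\<lambda>w. ninv (tw A w)"] by (simp add: comp_def)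
  also have "\<dots> \<le> (\<Sum>w\<in>?SA. ninv (tw A w))"
    using maxw_map by (intro sum_mono2[OF fA]) auto
  finally show ?thesis by (simp add: M_def)
qed

end



lemma walk_nth_OE: "walk F w \<Longrightarrow> i < length w \<Longrightarrow> w!i \<in> OE F"
  unfolding walk_def by (meson nth_mem subsetD)

lemma same_dir:
  assumes "walk F w" "\<forall>i. Suc i < length w \<longrightarrow> snd (w!i) = snd (w!Suc i)"
  shows "\<forall>j<length w. snd (w!j) = snd (w!0)"
proof (intro allI impI)
  fix j assume "j < length w" then show "snd (w!j) = snd (w!0)"
    using assms(2) by (induction j) auto
qed

lemma walk_ai:
  "walk F w \<Longrightarrow> src F (hd w) = Vtx v \<Longrightarrow> tgt F (last w) = Vtx u \<Longrightarrow> ai_path F v u (map fst w)"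
proof (induction "length w" arbitrary: w v u rule: less_induct)
  case less
  have ne: "w \<noteq> []" using less(2) by (simp add: walk_def)
  show ?case
  proof (cases "\<exists>i. Suc i < length w \<and> snd (w!i) \<noteq> snd (w!Suc i)")
    case True
    then obtain i where i: "Suc i < length w" "snd (w!i) \<noteq> snd (w!Suc i)" by blast
    have t: "tr F (w!i) (w!Suc i)" using walk_nth_tr[OF less(2) i(1)] .
    then obtain t0 where t0: "t0 \<in> fV F" "tgt F (w!i) = Vtx t0" "src F (w!Suc i) = Vtx t0"
       "okt (flab F t0) (w!i) (w!Suc i)" by (auto simp: tr_def)
    have lab: "flab F t0 \<in> {Interaction, Cut}" and fd: "fst (w!i) \<noteq> fst (w!Suc i)"
      using t0(4) i(2) by (auto simp: okt_def)
    let ?w1 = "take (Suc i) w" and ?w2 = "drop (Suc i) w"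
    have w1: "walk F ?w1" using walk_sub[OF less(2), of 0 "Suc i"] i by simp
    have w2: "walk F ?w2" using walk_sub[OF less(2), of "Suc i" "length w"] i by simp
    have h1: "hd ?w1 = hd w" using i by (simp add: hd_take)
    have l1: "last ?w1 = w!i" using i by (simp add: take_Suc_conv_app_nth)
    have h2: "hd ?w2 = w!Suc i" using i by (simp add: hd_drop_conv_nth)
    have l2: "last ?w2 = last w" using i by simp
    have a1: "ai_path F v t0 (map fst ?w1)"
      using less(1)[OF _ w1] i h1 l1 less(3) t0 by simp
    have a2: "ai_path F t0 u (map fst ?w2)"
      using less(1)[OF _ w2] i h2 l2 less(4) t0 by simp
    have "last (map fst ?w1) \<noteq> hd (map fst ?w2)"
    proof -
      have "?w1 \<noteq> []" "?w2 \<noteq> []" using i by auto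
      then show ?thesis using fd l1 h2 by (simp add: last_map hd_map del: take_Suc)
    qed
    then have "ai_path F v u (map fst ?w1 @ map fst ?w2)"
      using ai_join[OF a1 a2 t0(1)] lab by blast
    moreover have "map fst w = map fst ?w1 @ map fst ?w2" by (simp flip: map_append)
    ultimately show ?thesis by simp
  next
    case False
    then have sd: "\<forall>j<length w. snd (w!j) = snd (w!0)" using same_dir[OF less(2)] by blast
    have fe: "set (map fst w) \<subseteq> fE F" using less(2) by (auto simp: walk_def OE_def)
    have adj: "\<And>i. Suc i < length w \<Longrightarrow> tgt F (w!i) = src F (w!Suc i)"
      using walk_nth_tr[OF less(2)] by (force simp: tr_def)
    show ?thesis
    proof (cases "snd (w!0)")
      case True
      have sdT: "\<And>j. j < length w \<Longrightarrow> w!j = (fst (w!j), True)" using sd True by (simp add: prod_eq_iff)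
      have "dpath F v u (map fst w)"
        unfolding dpath_def
      proof (intro conjI allI impI)
        show "map fst w \<noteq> []" using ne by simp
        show "set (map fst w) \<subseteq> fE F" using fe .
        show "fup F (hd (map fst w)) = Vtx v"
        proof -
          have "hd w = (fst (hd w), True)" using sdT[of 0] ne by (simp add: hd_conv_nth)
          then have "src F (hd w) = fup F (fst (hd w))" by (metis src.simps)
          then show ?thesis using less(3) ne by (simp add: hd_map)
        qed
        show "flo F (last (map fst w)) = Vtx u"
        proof -
          have "last w = (fst (last w), True)" using sdT[of "length w - 1"] ne by (simp add: last_conv_nth)
          then have "tgt F (last w) = flo F (fst (last w))" by (metis tgt.simps)
          then show ?thesis using less(4) ne by (simp add: last_map)
        qed
        fix i assume i: "Suc i < length (map fst w)"
        show "flo F (map fst w ! i) = fup F (map fst w ! Suc i)"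
        proof -
          have i': "Suc i < length w" "i < length w" using i by auto
          have "tgt F (w!i) = flo F (fst (w!i))" using sdT[OF i'(2)] by (metis tgt.simps)
          moreover have "src F (w!Suc i) = fup F (fst (w!Suc i))" using sdT[OF i'(1)] by (metis src.simps)
          ultimately show ?thesis using adj[OF i'(1)] i' by simp
        qed
      qed
      then show ?thesis by (simp add: path_def ai_base)
    next
      case False
      have sdF: "\<And>j. j < length w \<Longrightarrow> w!j = (fst (w!j), False)" using sd False by (simp add: prod_eq_iff)
      let ?es = "map fst w"
      have "dpath F u v (rev ?es)"
        unfolding dpath_def
      proof (intro conjI allI impI)
        show "rev ?es \<noteq> []" using ne by simp
        show "set (rev ?es) \<subseteq> fE F" using fe by simp
        show "fup F (hd (rev ?es)) = Vtx u"
        proof -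
          have "last w = (fst (last w), False)" using sdF[of "length w - 1"] ne by (simp add: last_conv_nth)
          then have "tgt F (last w) = fup F (fst (last w))" by (metis tgt.simps)
          then show ?thesis using less(4) ne by (simp add: last_map hd_rev)
        qed
        show "flo F (last (rev ?es)) = Vtx v"
        proof -
          have "hd w = (fst (hd w), False)" using sdF[of 0] ne by (simp add: hd_conv_nth)
          then have "src F (hd w) = flo F (fst (hd w))" by (metis src.simps)
          then show ?thesis using less(3) ne by (simp add: hd_map last_rev)
        qed
        fix i assume i: "Suc i < length (rev ?es)"
        let ?n = "length w"
        have r1: "rev ?es ! i = fst (w ! (?n - Suc i))" using i by (simp add: rev_nth)
        have r2: "rev ?es ! Suc i = fst (w ! (?n - Suc (Suc i)))" using i by (simp add: rev_nth)
        have k: "Suc (?n - Suc (Suc i)) = ?n - Suc i" using i by simp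
        have "tgt F (w!(?n - Suc (Suc i))) = src F (w!(?n - Suc i))"
          using adj[of "?n - Suc (Suc i)"] k i by simp
        moreover have "w!(?n - Suc (Suc i)) = (fst (w!(?n - Suc (Suc i))), False)" using sdF i by simp
        moreover have "w!(?n - Suc i) = (fst (w!(?n - Suc i)), False)" using sdF i by simp
        ultimately show "flo F (rev ?es ! i) = fup F (rev ?es ! Suc i)"
          unfolding r1 r2 by (metis src.simps tgt.simps)
      qed
      then show ?thesis by (simp add: path_def ai_base)
    qed
  qed
qed

definition endpoints_ok :: "flow \<Rightarrow> bool" where
  "endpoints_ok F \<longleftrightarrow> (\<forall>e\<in>fE F. fup F e \<in> {Top} \<union> Vtx ` fV F \<and> flo F e \<in> {Bot} \<union> Vtx ` fV F)"

lemma closed_min_distinct: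
  assumes "walk F w" "src F (hd w) = Vtx v" "tgt F (last w) = Vtx v"
  shows "\<exists>w' v'. walk F w' \<and> src F (hd w') = Vtx v' \<and> tgt F (last w') = Vtx v' \<and> distinct (map fst w')"
  using assms
proof (induction "length w" arbitrary: w v rule: less_induct)
  case less
  show ?case
  proof (cases "distinct (map fst w)")
    case True then show ?thesis using less by blast
  next
    case False
    then obtain i j where ij: "i < j" "j < length w" "fst (w!i) = fst (w!j)"
    proof -
      obtain i j where "i < length w" "j < length w" "i \<noteq> j" "fst (w!i) = fst (w!j)"
        using False by (auto simp: distinct_conv_nth)
      then show ?thesis using that by (cases "i < j") (auto, metis linorder_neqE_nat)
    qed
    show ?thesis
    proof (cases "w!i = w!j")
      case True
      let ?s = "take (j - i) (drop i w)"
      have ws: "walk F ?s" using walk_sub[OF less(2) ij(1)] ij by simp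
      have hd: "hd ?s = w!i" using ij by (simp add: hd_take hd_drop_conv_nth)
      have lst: "last ?s = w!(j-1)"
      proof -
        have "?s \<noteq> []" using ij by simp
        then have "last ?s = ?s ! (length ?s - 1)" by (simp add: last_conv_nth)
        also have "length ?s = j - i" using ij by simp
        also have "?s ! (j - i - 1) = w ! (j - 1)" using ij by (simp add: nth_take nth_drop)
        finally show ?thesis .
      qed
      have "tr F (w!(j-1)) (w!j)" using walk_nth_tr[OF less(2), of "j-1"] ij by simp
      then obtain v' where "tgt F (w!(j-1)) = Vtx v'" "src F (w!j) = Vtx v'"
        using tr_tgt_src by blast
      moreover have "length ?s < length w" using ij by simp
      ultimately show ?thesis using less(1) ws hd lst True by metis
    next
      case False
      have sn: "snd (w!i) \<noteq> snd (w!j)" using False ij(3) by (simp add: prod_eq_iff)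
      have ji: "j \<noteq> Suc i"
      proof
        assume "j = Suc i"
        then have "tr F (w!i) (w!j)" using walk_nth_tr[OF less(2), of i] ij by simp
        then show False using ij(3) sn by (auto simp: tr_def okt_def)
      qed
      let ?s = "take (j - Suc i) (drop (Suc i) w)"
      have ij2: "Suc i < j" using ij ji by simp
      have ws: "walk F ?s" using walk_sub[OF less(2) ij2] ij by simp
      have hd: "hd ?s = w!Suc i" using ij2 ij by (simp add: hd_take hd_drop_conv_nth)
      have lst: "last ?s = w!(j-1)"
      proof -
        have "?s \<noteq> []" using ij2 ij by simp
        then have "last ?s = ?s ! (length ?s - 1)" by (simp add: last_conv_nth)
        also have "length ?s = j - Suc i" using ij by simp
        also have "?s ! (j - Suc i - 1) = w ! (Suc i + (j - Suc i - 1))" using ij2 ij by (simp add: nth_take nth_drop)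
        also have "Suc i + (j - Suc i - 1) = j - 1" using ij2 by simp
        finally show ?thesis .
      qed
      have t1: "tr F (w!i) (w!Suc i)" using walk_nth_tr[OF less(2), of i] ij by simp
      have jj: "Suc (j-1) = j" using ij2 by simp
      have t2: "tr F (w!(j-1)) (w!j)" using walk_nth_tr[OF less(2), of "j-1"] ij unfolding jj by simp
      obtain v' where v': "tgt F (w!i) = Vtx v'" "src F (w!Suc i) = Vtx v'" using tr_tgt_src[OF t1] by blast
      have "tgt F (w!(j-1)) = src F (w!j)" using t2 by (auto simp: tr_def)
      also have "src F (w!j) = tgt F (w!i)"
        using ij(3) sn by (cases "w!i"; cases "w!j") auto
      finally have "tgt F (w!(j-1)) = Vtx v'" using v' by simp
      moreover have "length ?s < length w" using ij by simp
      ultimately show ?thesis using less(1) ws hd lst v' by metis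
    qed
  qed
qed

lemma cycle_free_NC:
  assumes "cycle_free F" "endpoints_ok F" shows "NC F"
  unfolding NC_def
proof
  assume "\<exists>w v. walk F w \<and> src F (hd w) = Vtx v \<and> tgt F (last w) = Vtx v"
  then obtain w v where w: "walk F w" "src F (hd w) = Vtx v" "tgt F (last w) = Vtx v"
      "distinct (map fst w)" using closed_min_distinct by metis
  have ne: "w \<noteq> []" and "hd w \<in> OE F" using w by (auto simp: walk_def)
  then have "fst (hd w) \<in> fE F" by (auto simp: OE_def)
  then have "v \<in> fV F" using w(2) assms(2) unfolding endpoints_ok_def
    by (cases "hd w") (auto split: if_splits)
  then have "ai_cycle F v (map fst w)" using walk_ai[OF w(1,2,3)] w(4) by (simp add: ai_cycle_def)
  then show False using assms(1) by (auto simp: cycle_free_def)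
qed



definition cards :: "flow \<Rightarrow> bool" where
  "cards F \<longleftrightarrow> (\<forall>v\<in>fV F. card {e\<in>fE F. flo F e = Vtx v} = upper_count (flab F v)
               \<and> card {e\<in>fE F. fup F e = Vtx v} = lower_count (flab F v))"

definition Inv :: "flow \<Rightarrow> bool" where
  "Inv F \<longleftrightarrow> finite (fV F) \<and> finite (fE F) \<and> endpoints_ok F \<and> cards F \<and> NC F"

lemma card2_eq: "finite S \<Longrightarrow> card S = 2 \<Longrightarrow> a \<in> S \<Longrightarrow> b \<in> S \<Longrightarrow> a \<noteq> b \<Longrightarrow> S = {a, b}"
proof -
  assume f: "finite S" and c: "card S = 2" and ab: "a \<in> S" "b \<in> S" "a \<noteq> b"
  have "{a,b} \<subseteq> S" using ab by auto
  moreover have "card {a,b} = card S" using c ab by simp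
  ultimately show "S = {a,b}" using f by (metis card_subset_eq)
qed

lemma card1_eq: "finite S \<Longrightarrow> card S = 1 \<Longrightarrow> a \<in> S \<Longrightarrow> S = {a}"
  by (metis card_1_singletonE singletonD)

lemma card0_eq: "finite S \<Longrightarrow> card S = 0 \<Longrightarrow> S = {}"
  by simp

lemma NC_two:
  assumes "NC F" "tr F x y" "src F x = Vtx v" "tgt F y = Vtx v" shows False
proof -
  have "walk F [x, y]" using assms(2) tr_OE[OF assms(2)] by (simp add: walk_def)
  then show False using assms(1,3,4) by (auto simp: NC_def)
qed

lemma NC_one:
  assumes "NC F" "x \<in> OE F" "src F x = Vtx v" "tgt F x = Vtx v" shows False
proof -
  have "walk F [x]" using assms(2) by (simp add: walk_def)
  then show False using assms(1,3,4) by (auto simp: NC_def)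
qed



locale c3 =
  fixes A B :: flow and g k e1 e2 e e3 e4 k1 k2 g3 g4 f13 f14 f23 f24 :: nat
  assumes invA: "Inv A"
  and a1: "g \<in> fV A" "flab A g = Contr" "k \<in> fV A" "flab A k = Cocontr"
  and a2: "e1 \<in> fE A" "e2 \<in> fE A" "e \<in> fE A" "e3 \<in> fE A" "e4 \<in> fE A"
  and a3: "flo A e1 = Vtx g" "flo A e2 = Vtx g" "e1 \<noteq> e2"
     "fup A e = Vtx g" "flo A e = Vtx k"
     "fup A e3 = Vtx k" "fup A e4 = Vtx k" "e3 \<noteq> e4"
  and a4: "k1 \<notin> fV A" "k2 \<notin> fV A" "g3 \<notin> fV A" "g4 \<notin> fV A" "distinct [k1, k2, g3, g4]"
  and a5: "f13 \<notin> fE A" "f14 \<notin> fE A" "f23 \<notin> fE A" "f24 \<notin> fE A" "distinct [f13, f14, f23, f24]"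
  and ag: "agrees B ((fV A - {g, k}) \<union> {k1, k2, g3, g4}) ((fE A - {e}) \<union> {f13, f14, f23, f24})
       ((flab A)(k1 := Cocontr, k2 := Cocontr, g3 := Contr, g4 := Contr))
       ((fup A)(e3 := Vtx g3, e4 := Vtx g4, f13 := Vtx k1, f14 := Vtx k1,
                f23 := Vtx k2, f24 := Vtx k2))
       ((flo A)(e1 := Vtx k1, e2 := Vtx k2, f13 := Vtx g3, f14 := Vtx g4,
                f23 := Vtx g3, f24 := Vtx g4))"
begin

lemma finVA: "finite (fV A)" and finEA: "finite (fE A)" and epA: "endpoints_ok A"
  and cardsA: "cards A" and ncA: "NC A"
  using invA by (auto simp: Inv_def)

lemma gk: "g \<noteq> k" using a1 by auto

lemma inG: "{a\<in>fE A. flo A a = Vtx g} = {e1, e2}"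
  using cardsA a1 a2 a3 finEA unfolding cards_def by (intro card2_eq) auto
lemma outG: "{a\<in>fE A. fup A a = Vtx g} = {e}"
  using cardsA a1 a2 a3 finEA unfolding cards_def by (intro card1_eq) auto
lemma inK: "{a\<in>fE A. flo A a = Vtx k} = {e}"
  using cardsA a1 a2 a3 finEA unfolding cards_def by (intro card1_eq) auto
lemma outK: "{a\<in>fE A. fup A a = Vtx k} = {e3, e4}"
  using cardsA a1 a2 a3 finEA unfolding cards_def by (intro card2_eq) auto

lemma inG': "a \<in> fE A \<Longrightarrow> flo A a = Vtx g \<longleftrightarrow> a = e1 \<or> a = e2" using inG a3 by blast
lemma outG': "a \<in> fE A \<Longrightarrow> fup A a = Vtx g \<longleftrightarrow> a = e" using outG a3 by blast
lemma inK': "a \<in> fE A \<Longrightarrow> flo A a = Vtx k \<longleftrightarrow> a = e" using inK a3 by blast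
lemma outK': "a \<in> fE A \<Longrightarrow> fup A a = Vtx k \<longleftrightarrow> a = e3 \<or> a = e4" using outK a3 by blast

lemma upA: "a \<in> fE A \<Longrightarrow> fup A a = Top \<or> (\<exists>v\<in>fV A. fup A a = Vtx v)"
  using epA by (auto simp: endpoints_ok_def)
lemma loA: "a \<in> fE A \<Longrightarrow> flo A a = Bot \<or> (\<exists>v\<in>fV A. flo A a = Vtx v)"
  using epA by (auto simp: endpoints_ok_def)

lemma ne_e: "e \<noteq> e1" "e \<noteq> e2" "e \<noteq> e3" "e \<noteq> e4"
  using a3 gk by auto

lemma ne_13: "e1 \<noteq> e3" "e1 \<noteq> e4" "e2 \<noteq> e3" "e2 \<noteq> e4"
proof -
  have t: "tr A (e, True) (e3, True)" "tr A (e, True) (e4, True)"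
    using a1 a2 a3 by (auto simp: tr_def okt_def)
  show "e1 \<noteq> e3" using NC_two[OF ncA t(1), of g] a3 by auto
  show "e2 \<noteq> e3" using NC_two[OF ncA t(1), of g] a3 by auto
  show "e1 \<noteq> e4" using NC_two[OF ncA t(2), of g] a3 by auto
  show "e2 \<noteq> e4" using NC_two[OF ncA t(2), of g] a3 by auto
qed

lemma newv: "k1 \<noteq> g" "k1 \<noteq> k" "k2 \<noteq> g" "k2 \<noteq> k" "g3 \<noteq> g" "g3 \<noteq> k" "g4 \<noteq> g" "g4 \<noteq> k"
  using a1 a4 by auto
lemma newe: "f13 \<noteq> e" "f14 \<noteq> e" "f23 \<noteq> e" "f24 \<noteq> e"
  "f13 \<noteq> e1" "f14 \<noteq> e1" "f23 \<noteq> e1" "f24 \<noteq> e1"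
  "f13 \<noteq> e2" "f14 \<noteq> e2" "f23 \<noteq> e2" "f24 \<noteq> e2"
  "f13 \<noteq> e3" "f14 \<noteq> e3" "f23 \<noteq> e3" "f24 \<noteq> e3"
  "f13 \<noteq> e4" "f14 \<noteq> e4" "f23 \<noteq> e4" "f24 \<noteq> e4"
  using a2 a5 by auto

lemma VB: "fV B = (fV A - {g, k}) \<union> {k1, k2, g3, g4}" and EB: "fE B = (fE A - {e}) \<union> {f13, f14, f23, f24}"
  using ag by (auto simp: agrees_def)

lemma labB: "v \<in> fV B \<Longrightarrow> flab B v = ((flab A)(k1 := Cocontr, k2 := Cocontr, g3 := Contr, g4 := Contr)) v"
  using ag by (auto simp: agrees_def)
lemma upB: "a \<in> fE B \<Longrightarrow> fup B a = ((fup A)(e3 := Vtx g3, e4 := Vtx g4, f13 := Vtx k1, f14 := Vtx k1,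
                f23 := Vtx k2, f24 := Vtx k2)) a"
  using ag by (auto simp: agrees_def)
lemma loB: "a \<in> fE B \<Longrightarrow> flo B a = ((flo A)(e1 := Vtx k1, e2 := Vtx k2, f13 := Vtx g3, f14 := Vtx g4,
                f23 := Vtx g3, f24 := Vtx g4)) a"
  using ag by (auto simp: agrees_def)


lemma loA_nv: "a \<in> fE A \<Longrightarrow> v \<notin> fV A \<Longrightarrow> flo A a \<noteq> Vtx v"
  using loA by fastforce
lemma upA_nv: "a \<in> fE A \<Longrightarrow> v \<notin> fV A \<Longrightarrow> fup A a \<noteq> Vtx v"
  using upA by fastforce

lemma dist_e: "e1 \<noteq> e2" "e3 \<noteq> e4" "f13 \<noteq> f14" "f13 \<noteq> f23" "f13 \<noteq> f24" "f14 \<noteq> f23" "f14 \<noteq> f24" "f23 \<noteq> f24"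
  "k1 \<noteq> k2" "k1 \<noteq> g3" "k1 \<noteq> g4" "k2 \<noteq> g3" "k2 \<noteq> g4" "g3 \<noteq> g4"
  using a3 a5 a4 by auto

lemmas dd = dist_e dist_e[symmetric] newe newe[symmetric] ne_e ne_e[symmetric] ne_13 ne_13[symmetric]
  newv newv[symmetric] gk gk[symmetric]

lemma loB_vals: "flo B e1 = Vtx k1" "flo B e2 = Vtx k2" "flo B f13 = Vtx g3" "flo B f14 = Vtx g4"
  "flo B f23 = Vtx g3" "flo B f24 = Vtx g4" "flo B e3 = flo A e3" "flo B e4 = flo A e4"
  using loB EB a2 dd by auto
lemma upB_vals: "fup B e3 = Vtx g3" "fup B e4 = Vtx g4" "fup B f13 = Vtx k1" "fup B f14 = Vtx k1"
  "fup B f23 = Vtx k2" "fup B f24 = Vtx k2" "fup B e1 = fup A e1" "fup B e2 = fup A e2"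
  using upB EB a2 dd by auto
lemma loB_oth: "a \<in> fE A \<Longrightarrow> a \<noteq> e \<Longrightarrow> a \<noteq> e1 \<Longrightarrow> a \<noteq> e2 \<Longrightarrow> flo B a = flo A a"
  using loB[of a] EB a5 by auto
lemma upB_oth: "a \<in> fE A \<Longrightarrow> a \<noteq> e \<Longrightarrow> a \<noteq> e3 \<Longrightarrow> a \<noteq> e4 \<Longrightarrow> fup B a = fup A a"
  using upB[of a] EB a5 by auto

lemma EB_cases:
  assumes "a \<in> fE B"
  obtains "a = f13" | "a = f14" | "a = f23" | "a = f24" | "a = e1" | "a = e2" | "a = e3" | "a = e4"
   | "a \<in> fE A" "a \<noteq> e" "a \<noteq> e1" "a \<noteq> e2" "a \<noteq> e3" "a \<noteq> e4" "a \<noteq> f13" "a \<noteq> f14" "a \<noteq> f23" "a \<noteq> f24"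
  using assms EB by blast

lemma EB_in: "e1 \<in> fE B" "e2 \<in> fE B" "e3 \<in> fE B" "e4 \<in> fE B" "f13 \<in> fE B" "f14 \<in> fE B" "f23 \<in> fE B" "f24 \<in> fE B"
  "e \<notin> fE B"
  using EB a2 dd a5 by auto

lemma loB_k1: "a \<in> fE B \<Longrightarrow> flo B a = Vtx k1 \<longleftrightarrow> a = e1"
  by (erule EB_cases) (simp_all add: loB_vals upB_vals loB_oth upB_oth loA_nv upA_nv a4 a2 dd)

lemma loB_k2: "a \<in> fE B \<Longrightarrow> flo B a = Vtx k2 \<longleftrightarrow> a = e2"
  by (erule EB_cases) (simp_all add: loB_vals upB_vals loB_oth upB_oth loA_nv upA_nv a4 a2 dd)

lemma loB_g3: "a \<in> fE B \<Longrightarrow> flo B a = Vtx g3 \<longleftrightarrow> a = f13 \<or> a = f23"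
  by (erule EB_cases) (simp_all add: loB_vals upB_vals loB_oth upB_oth loA_nv upA_nv a4 a2 dd)

lemma loB_g4: "a \<in> fE B \<Longrightarrow> flo B a = Vtx g4 \<longleftrightarrow> a = f14 \<or> a = f24"
  by (erule EB_cases) (simp_all add: loB_vals upB_vals loB_oth upB_oth loA_nv upA_nv a4 a2 dd)

lemma upB_k1: "a \<in> fE B \<Longrightarrow> fup B a = Vtx k1 \<longleftrightarrow> a = f13 \<or> a = f14"
  by (erule EB_cases) (simp_all add: loB_vals upB_vals loB_oth upB_oth loA_nv upA_nv a4 a2 dd)

lemma upB_k2: "a \<in> fE B \<Longrightarrow> fup B a = Vtx k2 \<longleftrightarrow> a = f23 \<or> a = f24"
  by (erule EB_cases) (simp_all add: loB_vals upB_vals loB_oth upB_oth loA_nv upA_nv a4 a2 dd)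

lemma upB_g3: "a \<in> fE B \<Longrightarrow> fup B a = Vtx g3 \<longleftrightarrow> a = e3"
  by (erule EB_cases) (simp_all add: loB_vals upB_vals loB_oth upB_oth loA_nv upA_nv a4 a2 dd)

lemma upB_g4: "a \<in> fE B \<Longrightarrow> fup B a = Vtx g4 \<longleftrightarrow> a = e4"
  by (erule EB_cases) (simp_all add: loB_vals upB_vals loB_oth upB_oth loA_nv upA_nv a4 a2 dd)

lemma loB_old: "a \<in> fE B \<Longrightarrow> v \<in> fV A \<Longrightarrow> v \<noteq> g \<Longrightarrow> v \<noteq> k \<Longrightarrow>
   flo B a = Vtx v \<longleftrightarrow> a \<in> fE A \<and> a \<noteq> e \<and> flo A a = Vtx v"
  by (erule EB_cases) (use a4 a5 a3 a2 in \<open>auto simp add: loB_vals upB_vals loB_oth upB_oth dd\<close>)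
lemma upB_old: "a \<in> fE B \<Longrightarrow> v \<in> fV A \<Longrightarrow> v \<noteq> g \<Longrightarrow> v \<noteq> k \<Longrightarrow>
   fup B a = Vtx v \<longleftrightarrow> a \<in> fE A \<and> a \<noteq> e \<and> fup A a = Vtx v"
  by (erule EB_cases) (use a4 a5 a3 a2 in \<open>auto simp add: loB_vals upB_vals loB_oth upB_oth dd\<close>)
lemma loA_old: "a \<in> fE A \<Longrightarrow> a \<noteq> e \<Longrightarrow> flo A a \<noteq> Vtx g \<Longrightarrow> flo A a \<noteq> Vtx k \<Longrightarrow> a \<in> fE B \<and> flo B a = flo A a"
  using EB a3 loB_oth by auto
lemma upA_old: "a \<in> fE A \<Longrightarrow> a \<noteq> e \<Longrightarrow> fup A a \<noteq> Vtx g \<Longrightarrow> fup A a \<noteq> Vtx k \<Longrightarrow> a \<in> fE B \<and> fup B a = fup A a"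
  using EB a3 upB_oth by auto

definition NT :: "((nat \<times> bool) \<times> (nat \<times> bool)) set" where
  "NT = {((e1,True),(f13,True)), ((e1,True),(f14,True)), ((e2,True),(f23,True)), ((e2,True),(f24,True)),
      ((f13,True),(e3,True)), ((f23,True),(e3,True)), ((f14,True),(e4,True)), ((f24,True),(e4,True)),
      ((f13,False),(e1,False)), ((f14,False),(e1,False)), ((f23,False),(e2,False)), ((f24,False),(e2,False)),
      ((e3,False),(f13,False)), ((e3,False),(f23,False)), ((e4,False),(f14,False)), ((e4,False),(f24,False))}"

definition OT :: "((nat \<times> bool) \<times> (nat \<times> bool)) set" where
  "OT = {((e1,True),(e,True)), ((e2,True),(e,True)), ((e,False),(e1,False)), ((e,False),(e2,False)),
         ((e,True),(e3,True)), ((e,True),(e4,True)), ((e3,False),(e,False)), ((e4,False),(e,False))}"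


lemma trA_char: "tr A x y \<Longrightarrow> (tgt A x \<noteq> Vtx g \<and> tgt A x \<noteq> Vtx k) \<or> (x, y) \<in> OT"
proof -
  assume t: "tr A x y"
  obtain a d b d' where xy: "x = (a,d)" "y = (b,d')" by (cases x, cases y)
  have ab: "a \<in> fE A" "b \<in> fE A" and sv: "\<exists>v\<in>fV A. tgt A x = Vtx v \<and> src A y = Vtx v \<and> okt (flab A v) x y"
    using t xy by (auto simp: tr_def)
  show ?thesis
  proof (cases "tgt A x = Vtx g")
    case True
    then have s: "src A y = Vtx g" and o: "d = d'" using sv a1 xy by (auto simp: okt_def)
    show ?thesis
    proof (cases d)
      case True
      then have "a = e1 \<or> a = e2" "b = e" using \<open>tgt A x = Vtx g\<close> s xy o inG'[OF ab(1)] outG'[OF ab(2)] by auto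
      then show ?thesis using xy o True by (auto simp: OT_def)
    next
      case False
      then have "a = e" "b = e1 \<or> b = e2" using \<open>tgt A x = Vtx g\<close> s xy o outG'[OF ab(1)] inG'[OF ab(2)] by auto
      then show ?thesis using xy o False by (auto simp: OT_def)
    qed
  next
    case ng: False
    show ?thesis
    proof (cases "tgt A x = Vtx k")
      case True
      then have s: "src A y = Vtx k" and o: "d = d'" using sv a1 xy by (auto simp: okt_def)
      show ?thesis
      proof (cases d)
        case True
        then have "a = e" "b = e3 \<or> b = e4" using \<open>tgt A x = Vtx k\<close> s xy o inK'[OF ab(1)] outK'[OF ab(2)] by auto
        then show ?thesis using xy o True by (auto simp: OT_def)
      next
        case False
        then have "a = e3 \<or> a = e4" "b = e" using \<open>tgt A x = Vtx k\<close> s xy o outK'[OF ab(1)] inK'[OF ab(2)] by auto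
        then show ?thesis using xy o False by (auto simp: OT_def)
      qed
    qed (use ng in blast)
  qed
qed

lemma OT_tr: "p \<in> OT \<Longrightarrow> tr A (fst p) (snd p)"
  unfolding OT_def using a1 a2 a3 by (auto simp: tr_def okt_def)
lemma labB_old: "v \<in> fV A \<Longrightarrow> v \<noteq> g \<Longrightarrow> v \<noteq> k \<Longrightarrow> flab B v = flab A v \<and> v \<in> fV B"
  using labB[of v] VB a4 by auto
lemma labB_new: "flab B k1 = Cocontr" "flab B k2 = Cocontr" "flab B g3 = Contr" "flab B g4 = Contr"
  "k1 \<in> fV B" "k2 \<in> fV B" "g3 \<in> fV B" "g4 \<in> fV B"
  using labB VB dist_e by auto

lemma tgtB_old: "fst x \<in> fE B \<Longrightarrow> v \<in> fV A \<Longrightarrow> v \<noteq> g \<Longrightarrow> v \<noteq> k \<Longrightarrow>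
   tgt B x = Vtx v \<longleftrightarrow> fst x \<in> fE A \<and> fst x \<noteq> e \<and> tgt A x = Vtx v"
  by (cases x) (auto simp: loB_old upB_old)
lemma srcB_old: "fst x \<in> fE B \<Longrightarrow> v \<in> fV A \<Longrightarrow> v \<noteq> g \<Longrightarrow> v \<noteq> k \<Longrightarrow>
   src B x = Vtx v \<longleftrightarrow> fst x \<in> fE A \<and> fst x \<noteq> e \<and> src A x = Vtx v"
  by (cases x) (auto simp: loB_old upB_old)

lemma e_ends: "tgt A (e, d) = Vtx g \<or> tgt A (e, d) = Vtx k" "src A (e, d) = Vtx g \<or> src A (e, d) = Vtx k"
  using a3 by auto

lemma trB_NT: "p \<in> NT \<Longrightarrow> tr B (fst p) (snd p)"
  unfolding NT_def using labB_new EB_in by (auto simp: tr_def okt_def loB_vals upB_vals)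

lemma trB_old: "tr A x y \<Longrightarrow> tgt A x \<noteq> Vtx g \<Longrightarrow> tgt A x \<noteq> Vtx k \<Longrightarrow> tr B x y"
proof -
  assume t: "tr A x y" and n: "tgt A x \<noteq> Vtx g" "tgt A x \<noteq> Vtx k"
  obtain v where v: "v \<in> fV A" "tgt A x = Vtx v" "src A y = Vtx v" "okt (flab A v) x y"
    and f: "fst x \<in> fE A" "fst y \<in> fE A" using t by (auto simp: tr_def)
  have vg: "v \<noteq> g" "v \<noteq> k" using n v by auto
  have xe: "fst x \<noteq> e"
  proof
    assume "fst x = e" then have "x = (e, snd x)" by (metis prod.collapse)
    then show False using e_ends(1)[of "snd x"] v vg by auto
  qed
  have ye: "fst y \<noteq> e"
  proof
    assume "fst y = e" then have "y = (e, snd y)" by (metis prod.collapse)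
    then show False using e_ends(2)[of "snd y"] v vg by auto
  qed
  have fb: "fst x \<in> fE B" "fst y \<in> fE B" using f xe ye EB by auto
  have "tgt B x = Vtx v" using tgtB_old[OF fb(1) v(1) vg] f xe v by simp
  moreover have "src B y = Vtx v" using srcB_old[OF fb(2) v(1) vg] f ye v by simp
  ultimately show "tr B x y" using fb labB_old[OF v(1) vg] v(4) by (auto simp: tr_def)
qed

lemma trB_char: "tr B x y \<Longrightarrow> (tr A x y \<and> tgt A x \<noteq> Vtx g \<and> tgt A x \<noteq> Vtx k) \<or> (x, y) \<in> NT"
proof -
  assume t: "tr B x y"
  obtain a d b d' where xy: "x = (a,d)" "y = (b,d')" by (cases x, cases y)
  obtain v where v: "v \<in> fV B" "tgt B x = Vtx v" "src B y = Vtx v" "okt (flab B v) x y"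
    and f: "a \<in> fE B" "b \<in> fE B" using t xy by (auto simp: tr_def)
  consider "v \<in> fV A" "v \<noteq> g" "v \<noteq> k" | "v = k1" | "v = k2" | "v = g3" | "v = g4" using v VB by auto
  then show ?thesis
  proof cases
    case 1
    have "tgt A x = Vtx v" "src A y = Vtx v" "a \<in> fE A" "b \<in> fE A"
      using tgtB_old[of x v] srcB_old[of y v] 1 v f xy by auto
    then have "tr A x y" using v 1 labB_old[OF 1] xy by (auto simp: tr_def)
    then show ?thesis using \<open>tgt A x = Vtx v\<close> 1 by auto
  next
    case 2
    then have o: "d = d'" using v labB_new xy by (auto simp: okt_def)
    show ?thesis using v(2,3) 2 o xy f by (cases d) (auto simp: NT_def loB_k1 upB_k1)
  next
    case 3
    then have o: "d = d'" using v labB_new xy by (auto simp: okt_def)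
    show ?thesis using v(2,3) 3 o xy f by (cases d) (auto simp: NT_def loB_k2 upB_k2)
  next
    case 4
    then have o: "d = d'" using v labB_new xy by (auto simp: okt_def)
    show ?thesis using v(2,3) 4 o xy f by (cases d) (auto simp: NT_def loB_g3 upB_g3)
  next
    case 5
    then have o: "d = d'" using v labB_new xy by (auto simp: okt_def)
    show ?thesis using v(2,3) 5 o xy f by (cases d) (auto simp: NT_def loB_g4 upB_g4)
  qed
qed

definition R3 :: "(nat \<times> bool) set" where "R3 = {f13, f14, f23, f24} \<times> UNIV"
definition phi3 :: "nat \<times> bool \<Rightarrow> nat \<times> bool" where
  "phi3 x = (if fst x \<in> {f13, f14, f23, f24} then (e, snd x) else x)"
definition psi3 :: "node \<Rightarrow> node" where
  "psi3 n = (case n of Vtx v \<Rightarrow> (if v = k1 \<or> v = k2 then Vtx g else if v = g3 \<or> v = g4 then Vtx k else Vtx v) | _ \<Rightarrow> n)"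
definition pre3 :: "nat \<times> bool \<Rightarrow> nat \<times> bool" where
  "pre3 x = (if snd x then (if fst x \<in> {f13, f14} then (e1, True) else (e2, True))
             else (if fst x \<in> {f13, f23} then (e3, False) else (e4, False)))"
definition suc3 :: "nat \<times> bool \<Rightarrow> nat \<times> bool" where
  "suc3 x = (if snd x then (if fst x \<in> {f13, f23} then (e3, True) else (e4, True))
             else (if fst x \<in> {f13, f14} then (e1, False) else (e2, False)))"

lemma R3_cases:
  assumes "x \<in> R3"
  obtains "x = (f13, True)" | "x = (f14, True)" | "x = (f23, True)" | "x = (f24, True)"
   | "x = (f13, False)" | "x = (f14, False)" | "x = (f23, False)" | "x = (f24, False)"
  using assms unfolding R3_def by (cases x) (metis (full_types) SigmaE2 empty_iff insertE)

lemma NT_pre: "x \<in> R3 \<Longrightarrow> (p, x) \<in> NT \<longleftrightarrow> p = pre3 x"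
  by (erule R3_cases) (simp_all add: NT_def pre3_def dd)
lemma NT_suc: "x \<in> R3 \<Longrightarrow> (x, s) \<in> NT \<longleftrightarrow> s = suc3 x"
  by (erule R3_cases) (simp_all add: NT_def suc3_def dd)

lemma R3_inj: "x \<in> R3 \<Longrightarrow> x' \<in> R3 \<Longrightarrow> pre3 x = pre3 x' \<Longrightarrow> suc3 x = suc3 x' \<Longrightarrow> x = x'"
  by (erule R3_cases; erule R3_cases) (simp_all add: pre3_def suc3_def dd)

lemma R3_notA: "x \<in> R3 \<Longrightarrow> fst x \<notin> fE A"
  using a5 by (auto simp: R3_def)

lemma trB_R_pre: "x \<in> R3 \<Longrightarrow> tr B p x \<Longrightarrow> p = pre3 x"
  using trB_char[of p x] R3_notA[of x] NT_pre[of x p] by (auto simp: tr_def)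
lemma trB_R_suc: "x \<in> R3 \<Longrightarrow> tr B x s \<Longrightarrow> s = suc3 x"
  using trB_char[of x s] R3_notA[of x] NT_suc[of x s] by (auto simp: tr_def)

lemma pre_suc_notR: "x \<in> R3 \<Longrightarrow> pre3 x \<notin> R3 \<and> suc3 x \<notin> R3"
  by (cases x) (auto simp: R3_def pre3_def suc3_def dd)

lemma phi_notR: "x \<notin> R3 \<Longrightarrow> phi3 x = x"
  by (cases x) (auto simp: phi3_def R3_def)

lemma psi_old: "n = Top \<or> n = Bot \<or> (\<exists>v\<in>fV A. n = Vtx v) \<Longrightarrow> psi3 n = n"
  using a4 by (auto simp: psi3_def)

lemma upA': "a \<in> fE A \<Longrightarrow> psi3 (fup A a) = fup A a" using upA psi_old by blast
lemma loA': "a \<in> fE A \<Longrightarrow> psi3 (flo A a) = flo A a" using loA psi_old by blast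

lemma psi_vals: "psi3 (Vtx k1) = Vtx g" "psi3 (Vtx k2) = Vtx g" "psi3 (Vtx g3) = Vtx k" "psi3 (Vtx g4) = Vtx k"
  using dist_e by (auto simp: psi3_def)

lemma sim3: "sim A B phi3 psi3 R3"
proof
  show "finite (fE A)" by (rule finEA)
  show "finite (fE B)" using EB finEA by simp
  show "NC A" by (rule ncA)
  show "\<And>x. x \<in> OE B \<Longrightarrow> phi3 x \<in> OE A"
    using EB a2 by (auto simp: OE_def phi3_def)
  show "\<And>x y. tr B x y \<Longrightarrow> tr A (phi3 x) (phi3 y)"
  proof -
    fix x y assume t: "tr B x y"
    show "tr A (phi3 x) (phi3 y)"
    proof (cases "(x, y) \<in> NT")
      case True
      then have "(phi3 x, phi3 y) \<in> OT" unfolding NT_def by (elim insertE emptyE) (simp_all add: OT_def phi3_def dd)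
      then show ?thesis using OT_tr by fastforce
    next
      case False
      then have "tr A x y" using trB_char[OF t] by blast
      then have "phi3 x = x" "phi3 y = y" using a5 by (auto simp: phi3_def tr_def)
      then show ?thesis using \<open>tr A x y\<close> by simp
    qed
  qed
  show "\<And>x. x \<in> OE B \<Longrightarrow> src A (phi3 x) = psi3 (src B x) \<and> tgt A (phi3 x) = psi3 (tgt B x)"
  proof -
    fix x assume "x \<in> OE B"
    then obtain a d where x: "x = (a, d)" "a \<in> fE B" by (auto simp: OE_def)
    show "src A (phi3 x) = psi3 (src B x) \<and> tgt A (phi3 x) = psi3 (tgt B x)"
      using x(2)
    proof (cases rule: EB_cases)
    qed (simp_all add: x phi3_def psi_vals loB_vals upB_vals loB_oth upB_oth upA' loA' a2 a3 dd)
  qed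
  show "\<And>v. \<exists>u. psi3 (Vtx v) = Vtx u" by (auto simp: psi3_def)
  show "R3 \<subseteq> OE B" "R3 \<noteq> {}" using EB by (auto simp: R3_def OE_def)
  show "\<And>x. x \<in> R3 \<Longrightarrow> (\<exists>p. tr B p x) \<and> (\<exists>s. tr B x s)"
  proof -
    fix x assume "x \<in> R3"
    then have "tr B (pre3 x) x" "tr B x (suc3 x)"
      using trB_NT[of "(pre3 x, x)"] NT_pre[of x "pre3 x"] trB_NT[of "(x, suc3 x)"] NT_suc[of x "suc3 x"] by auto
    then show "(\<exists>p. tr B p x) \<and> (\<exists>s. tr B x s)" by blast
  qed
  show "\<And>x y. x \<in> OE B \<Longrightarrow> y \<in> OE B \<Longrightarrow> x \<noteq> y \<Longrightarrow> phi3 x = phi3 y \<Longrightarrow> x \<in> R3 \<and> y \<in> R3"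
    using EB_in by (auto simp: phi3_def R3_def OE_def split: if_splits)
  show "\<And>x x' p p' s s'. x \<in> R3 \<Longrightarrow> x' \<in> R3 \<Longrightarrow> phi3 x = phi3 x' \<Longrightarrow> tr B p x \<Longrightarrow> tr B p' x'
            \<Longrightarrow> tr B x s \<Longrightarrow> tr B x' s' \<Longrightarrow> phi3 p = phi3 p' \<Longrightarrow> phi3 s = phi3 s' \<Longrightarrow> x = x'"
  proof -
    fix x x' p p' s s'
    assume r: "x \<in> R3" "x' \<in> R3" and ph: "phi3 x = phi3 x'" and t: "tr B p x" "tr B p' x'" "tr B x s" "tr B x' s'"
      and ps: "phi3 p = phi3 p'" "phi3 s = phi3 s'"
    have "p = pre3 x" "p' = pre3 x'" "s = suc3 x" "s' = suc3 x'"
      using trB_R_pre trB_R_suc r t by auto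
    moreover have "phi3 (pre3 x) = pre3 x" "phi3 (suc3 x) = suc3 x" "phi3 (pre3 x') = pre3 x'" "phi3 (suc3 x') = suc3 x'"
      using pre_suc_notR[OF r(1)] pre_suc_notR[OF r(2)] phi_notR by auto
    ultimately have "pre3 x = pre3 x'" "suc3 x = suc3 x'" using ps by auto
    moreover have "snd x = snd x'" using ph r by (auto simp: phi3_def R3_def)
    ultimately show "x = x'" using r R3_inj by blast
  qed
  show "\<And>x y. x \<in> OE B \<Longrightarrow> x \<notin> R3 \<Longrightarrow> tr A y (phi3 x) \<Longrightarrow> \<exists>y'. tr B y' x"
  proof -
    fix x y assume x: "x \<in> OE B" "x \<notin> R3" and t: "tr A y (phi3 x)"
    have px: "phi3 x = x" using x by (auto simp: phi3_def R3_def OE_def)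
    show "\<exists>y'. tr B y' x"
    proof (cases "(y, x) \<in> OT")
      case True
      have "fst x \<noteq> e" using x EB_in by (auto simp: OE_def)
      then have "x \<in> {(e3,True),(e4,True),(e1,False),(e2,False)}" using True by (auto simp: OT_def)
      then show ?thesis
        using trB_NT[of "((f13,True),(e3,True))"] trB_NT[of "((f14,True),(e4,True))"]
          trB_NT[of "((f13,False),(e1,False))"] trB_NT[of "((f23,False),(e2,False))"]
        by (auto simp: NT_def dd)
    next
      case False
      then show ?thesis using trA_char[of y x] t px trB_old[of y x] by (cases y) auto
    qed
  qed
  show "\<And>x y. x \<in> OE B \<Longrightarrow> x \<notin> R3 \<Longrightarrow> tr A (phi3 x) y \<Longrightarrow> \<exists>y'. tr B x y'"
  proof -
    fix x y assume x: "x \<in> OE B" "x \<notin> R3" and t: "tr A (phi3 x) y"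
    have px: "phi3 x = x" using x by (auto simp: phi3_def R3_def OE_def)
    show "\<exists>y'. tr B x y'"
    proof (cases "(x, y) \<in> OT")
      case True
      have "fst x \<noteq> e" using x EB_in by (auto simp: OE_def)
      then have "x \<in> {(e1,True),(e2,True),(e3,False),(e4,False)}" using True by (auto simp: OT_def)
      then show ?thesis
        using trB_NT[of "((e1,True),(f13,True))"] trB_NT[of "((e2,True),(f23,True))"]
          trB_NT[of "((e3,False),(f13,False))"] trB_NT[of "((e4,False),(f14,False))"]
        by (auto simp: NT_def dd)
    next
      case False
      then show ?thesis using trA_char[of x y] t px trB_old[of x y] by (cases y) auto
    qed
  qed
  show "\<And>x y. tr B x y \<Longrightarrow> x \<notin> R3 \<Longrightarrow> y \<notin> R3 \<Longrightarrow> ttyp A (phi3 x) (phi3 y) = ttyp B x y"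
  proof -
    fix x y assume t: "tr B x y" and n: "x \<notin> R3" "y \<notin> R3"
    have "(x, y) \<notin> NT" using n by (auto simp: NT_def R3_def)
    then have t2: "tr A x y" "tgt A x \<noteq> Vtx g" "tgt A x \<noteq> Vtx k" using trB_char[OF t] by auto
    have px: "phi3 x = x" "phi3 y = y" using n phi_notR by auto
    obtain v where v: "v \<in> fV A" "tgt A x = Vtx v" using t2 by (auto simp: tr_def)
    have vg: "v \<noteq> g" "v \<noteq> k" using v t2 by auto
    have fx: "fst x \<in> fE B" using t by (auto simp: tr_def)
    have "fst x \<noteq> e" using fx EB_in by auto
    then have "tgt B x = Vtx v" using tgtB_old[OF fx v(1) vg] v t2 by (auto simp: tr_def)
    then show "ttyp A (phi3 x) (phi3 y) = ttyp B x y"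
      using px v labB_old[OF v(1) vg] by (simp add: ttyp_def)
  qed
  show "\<And>x p s. x \<in> R3 \<Longrightarrow> tr B p x \<Longrightarrow> tr B x s \<Longrightarrow>
     p \<notin> R3 \<and> s \<notin> R3 \<and> ttyp B p x < ttyp B x s \<and> ttyp A (phi3 p) (phi3 x) = ttyp B x s
     \<and> ttyp A (phi3 x) (phi3 s) = ttyp B p x"
  proof -
    fix x p s assume r: "x \<in> R3" and t: "tr B p x" "tr B x s"
    have ps: "p = pre3 x" "s = suc3 x" using trB_R_pre trB_R_suc r t by auto
    have nr: "p \<notin> R3" "s \<notin> R3" using pre_suc_notR[OF r] ps by auto
    have "ttyp B p x < ttyp B x s \<and> ttyp A (phi3 p) (phi3 x) = ttyp B x s
     \<and> ttyp A (phi3 x) (phi3 s) = ttyp B p x"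
      unfolding ps using r
      by (elim R3_cases) (simp_all add: a1 a3 labB_new pre3_def suc3_def phi3_def ttyp_def loB_vals upB_vals dd)
    then show "p \<notin> R3 \<and> s \<notin> R3 \<and> ttyp B p x < ttyp B x s \<and> ttyp A (phi3 p) (phi3 x) = ttyp B x s
     \<and> ttyp A (phi3 x) (phi3 s) = ttyp B p x" using nr by blast
  qed
qed



lemma VB_old: "v \<in> fV A \<Longrightarrow> v \<noteq> g \<Longrightarrow> v \<noteq> k \<Longrightarrow> v \<in> fV B" using VB by auto

lemma epB: "endpoints_ok B"
  unfolding endpoints_ok_def
proof
  fix a assume a: "a \<in> fE B"
  have old: "\<And>n. n = Top \<or> n = Bot \<or> (\<exists>v\<in>fV A. n = Vtx v) \<Longrightarrow> n \<noteq> Vtx g \<Longrightarrow> n \<noteq> Vtx k \<Longrightarrow>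
     n = Top \<or> n = Bot \<or> n \<in> Vtx ` fV B" using VB_old by blast
  have nv: "Vtx k1 \<in> Vtx ` fV B" "Vtx k2 \<in> Vtx ` fV B" "Vtx g3 \<in> Vtx ` fV B" "Vtx g4 \<in> Vtx ` fV B"
    using labB_new by auto
  show "fup B a \<in> {Top} \<union> Vtx ` fV B \<and> flo B a \<in> {Bot} \<union> Vtx ` fV B"
    using a
  proof (cases rule: EB_cases)
    case 5
    have "fup A e1 \<noteq> Vtx g" "fup A e1 \<noteq> Vtx k" using outG'[OF a2(1)] outK'[OF a2(1)] dd by auto
    then show ?thesis using 5 nv old[of "fup A e1"] upA[OF a2(1)] loA[OF a2(1)] loB_vals upB_vals epA
      unfolding endpoints_ok_def by auto
  next
    case 6
    have "fup A e2 \<noteq> Vtx g" "fup A e2 \<noteq> Vtx k" using outG'[OF a2(2)] outK'[OF a2(2)] dd by auto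
    then show ?thesis using 6 nv old[of "fup A e2"] upA[OF a2(2)] loB_vals upB_vals epA
      unfolding endpoints_ok_def by auto
  next
    case 7
    have "flo A e3 \<noteq> Vtx g" "flo A e3 \<noteq> Vtx k" using inG'[OF a2(4)] inK'[OF a2(4)] dd by auto
    then show ?thesis using 7 nv old[of "flo A e3"] loA[OF a2(4)] loB_vals upB_vals epA
      unfolding endpoints_ok_def by auto
  next
    case 8
    have "flo A e4 \<noteq> Vtx g" "flo A e4 \<noteq> Vtx k" using inG'[OF a2(5)] inK'[OF a2(5)] dd by auto
    then show ?thesis using 8 nv old[of "flo A e4"] loA[OF a2(5)] loB_vals upB_vals epA
      unfolding endpoints_ok_def by auto
  next
    case 9
    have "fup A a \<noteq> Vtx g" "fup A a \<noteq> Vtx k" "flo A a \<noteq> Vtx g" "flo A a \<noteq> Vtx k"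
      using outG'[OF 9(1)] outK'[OF 9(1)] inG'[OF 9(1)] inK'[OF 9(1)] 9 by auto
    then show ?thesis using 9 old[of "fup A a"] old[of "flo A a"] upA[OF 9(1)] loA[OF 9(1)]
      loB_oth[OF 9(1)] upB_oth[OF 9(1)] by auto
  qed (use nv loB_vals upB_vals in auto)
qed

lemma set_old_lo: assumes "v \<in> fV A" "v \<noteq> g" "v \<noteq> k"
  shows "{a\<in>fE B. flo B a = Vtx v} = {a\<in>fE A. flo A a = Vtx v}"
proof (intro set_eqI iffI)
  fix a assume "a \<in> {a\<in>fE B. flo B a = Vtx v}" then show "a \<in> {a\<in>fE A. flo A a = Vtx v}"
    using loB_old[of a v] assms by auto
next
  fix a assume a: "a \<in> {a\<in>fE A. flo A a = Vtx v}"
  then have "a \<noteq> e" using a3 assms by auto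
  then have "a \<in> fE B" using a EB by auto
  then show "a \<in> {a\<in>fE B. flo B a = Vtx v}" using loB_old[of a v] assms a \<open>a \<noteq> e\<close> by auto
qed
lemma set_old_up: assumes "v \<in> fV A" "v \<noteq> g" "v \<noteq> k"
  shows "{a\<in>fE B. fup B a = Vtx v} = {a\<in>fE A. fup A a = Vtx v}"
proof (intro set_eqI iffI)
  fix a assume "a \<in> {a\<in>fE B. fup B a = Vtx v}" then show "a \<in> {a\<in>fE A. fup A a = Vtx v}"
    using upB_old[of a v] assms by auto
next
  fix a assume a: "a \<in> {a\<in>fE A. fup A a = Vtx v}"
  then have "a \<noteq> e" using a3 assms by auto
  then have "a \<in> fE B" using a EB by auto
  then show "a \<in> {a\<in>fE B. fup B a = Vtx v}" using upB_old[of a v] assms a \<open>a \<noteq> e\<close> by auto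
qed

lemma cardsB: "cards B"
  unfolding cards_def
proof
  fix v assume v: "v \<in> fV B"
  consider "v \<in> fV A" "v \<noteq> g" "v \<noteq> k" | "v = k1" | "v = k2" | "v = g3" | "v = g4" using v VB by auto
  then show "card {e\<in>fE B. flo B e = Vtx v} = upper_count (flab B v) \<and> card {e\<in>fE B. fup B e = Vtx v} = lower_count (flab B v)"
  proof cases
    case 1
    then show ?thesis using set_old_lo[OF 1] set_old_up[OF 1] labB_old[OF 1] cardsA unfolding cards_def by auto
  next
    case 2
    have "{a\<in>fE B. flo B a = Vtx v} = {e1}" "{a\<in>fE B. fup B a = Vtx v} = {f13, f14}"
      using 2 loB_k1 upB_k1 EB_in by auto
    then show ?thesis using 2 labB_new dd by simp
  next
    case 3
    have "{a\<in>fE B. flo B a = Vtx v} = {e2}" "{a\<in>fE B. fup B a = Vtx v} = {f23, f24}"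
      using 3 loB_k2 upB_k2 EB_in by auto
    then show ?thesis using 3 labB_new dd by simp
  next
    case 4
    have "{a\<in>fE B. flo B a = Vtx v} = {f13, f23}" "{a\<in>fE B. fup B a = Vtx v} = {e3}"
      using 4 loB_g3 upB_g3 EB_in by auto
    then show ?thesis using 4 labB_new dd by simp
  next
    case 5
    have "{a\<in>fE B. flo B a = Vtx v} = {f14, f24}" "{a\<in>fE B. fup B a = Vtx v} = {e4}"
      using 5 loB_g4 upB_g4 EB_in by auto
    then show ?thesis using 5 labB_new dd by simp
  qed
qed

lemma main3: "Inv B \<and> M B < M A"
proof -
  interpret S: sim A B phi3 psi3 R3 by (rule sim3)
  have "finite (fV B)" using VB finVA by simp
  moreover have "finite (fE B)" using EB finEA by simp
  ultimately show ?thesis using S.ncB S.M_less epB cardsB by (simp add: Inv_def)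
qed

end

lemma c3_main: "c3_step A B \<Longrightarrow> Inv A \<Longrightarrow> Inv B \<and> M B < M A"
  unfolding c3_step_def
  apply (elim exE conjE)
  subgoal premises p for g k e1 e2 e e3 e4 k1 k2 g3 g4 f13 f14 f23 f24
  proof -
    interpret c3 A B g k e1 e2 e e3 e4 k1 k2 g3 g4 f13 f14 f23 f24
      by (unfold_locales) (use p in auto)
    show ?thesis by (rule main3)
  qed
  done



locale c1 =
  fixes A B :: flow and g k e1 e2 e e3 n k1 k2 d1 d2 :: nat
  assumes invA: "Inv A"
  and a1: "g \<in> fV A" "flab A g = Contr" "k \<in> fV A" "flab A k = Cut"
  and a2: "e1 \<in> fE A" "e2 \<in> fE A" "e \<in> fE A" "e3 \<in> fE A" "e1 \<noteq> e2"
  and a3: "flo A e1 = Vtx g" "flo A e2 = Vtx g" "fup A e = Vtx g" "flo A e = Vtx k"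
     "flo A e3 = Vtx k" "e3 \<noteq> e"
  and a4: "n \<notin> fV A" "k1 \<notin> fV A" "k2 \<notin> fV A" "distinct [n, k1, k2]"
  and a5: "d1 \<notin> fE A" "d2 \<notin> fE A" "d1 \<noteq> d2"
  and ag: "agrees B ((fV A - {g, k}) \<union> {n, k1, k2}) ((fE A - {e}) \<union> {d1, d2})
       ((flab A)(n := Cocontr, k1 := Cut, k2 := Cut))
       ((fup A)(d1 := Vtx n, d2 := Vtx n))
       ((flo A)(e1 := Vtx k1, e2 := Vtx k2, e3 := Vtx n, d1 := Vtx k1, d2 := Vtx k2))"
begin

lemma finVA: "finite (fV A)" and finEA: "finite (fE A)" and epA: "endpoints_ok A"
  and cardsA: "cards A" and ncA: "NC A"
  using invA by (auto simp: Inv_def)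

lemma gk: "g \<noteq> k" using a1 by auto

lemma inG: "{a\<in>fE A. flo A a = Vtx g} = {e1, e2}"
  using cardsA a1 a2 a3 finEA unfolding cards_def by (intro card2_eq) auto
lemma outG: "{a\<in>fE A. fup A a = Vtx g} = {e}"
  using cardsA a1 a2 a3 finEA unfolding cards_def by (intro card1_eq) auto
lemma inK: "{a\<in>fE A. flo A a = Vtx k} = {e, e3}"
  using cardsA a1 a2 a3 finEA unfolding cards_def by (intro card2_eq) auto
lemma outK: "{a\<in>fE A. fup A a = Vtx k} = {}"
  using cardsA a1 a2 a3 finEA unfolding cards_def by (intro card0_eq) auto

lemma inG': "a \<in> fE A \<Longrightarrow> flo A a = Vtx g \<longleftrightarrow> a = e1 \<or> a = e2" using inG a3 by blast
lemma outG': "a \<in> fE A \<Longrightarrow> fup A a = Vtx g \<longleftrightarrow> a = e" using outG a3 by blast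
lemma inK': "a \<in> fE A \<Longrightarrow> flo A a = Vtx k \<longleftrightarrow> a = e \<or> a = e3" using inK a3 by blast
lemma outK': "a \<in> fE A \<Longrightarrow> fup A a \<noteq> Vtx k" using outK by blast

lemma upA: "a \<in> fE A \<Longrightarrow> fup A a = Top \<or> (\<exists>v\<in>fV A. fup A a = Vtx v)"
  using epA by (auto simp: endpoints_ok_def)
lemma loA: "a \<in> fE A \<Longrightarrow> flo A a = Bot \<or> (\<exists>v\<in>fV A. flo A a = Vtx v)"
  using epA by (auto simp: endpoints_ok_def)

lemma ne_e: "e \<noteq> e1" "e \<noteq> e2" "e \<noteq> e3" "e1 \<noteq> e3" "e2 \<noteq> e3"
  using a3 gk by auto

lemma newv: "n \<noteq> g" "n \<noteq> k" "k1 \<noteq> g" "k1 \<noteq> k" "k2 \<noteq> g" "k2 \<noteq> k"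
  using a1 a4 by auto
lemma newe: "d1 \<noteq> e" "d2 \<noteq> e" "d1 \<noteq> e1" "d2 \<noteq> e1" "d1 \<noteq> e2" "d2 \<noteq> e2" "d1 \<noteq> e3" "d2 \<noteq> e3"
  using a2 a5 by auto

lemma VB: "fV B = (fV A - {g, k}) \<union> {n, k1, k2}" and EB: "fE B = (fE A - {e}) \<union> {d1, d2}"
  using ag by (auto simp: agrees_def)

lemma labB: "v \<in> fV B \<Longrightarrow> flab B v = ((flab A)(n := Cocontr, k1 := Cut, k2 := Cut)) v"
  using ag by (auto simp: agrees_def)
lemma upB: "a \<in> fE B \<Longrightarrow> fup B a = ((fup A)(d1 := Vtx n, d2 := Vtx n)) a"
  using ag by (auto simp: agrees_def)
lemma loB: "a \<in> fE B \<Longrightarrow> flo B a = ((flo A)(e1 := Vtx k1, e2 := Vtx k2, e3 := Vtx n, d1 := Vtx k1, d2 := Vtx k2)) a"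
  using ag by (auto simp: agrees_def)

lemma loA_nv: "a \<in> fE A \<Longrightarrow> v \<notin> fV A \<Longrightarrow> flo A a \<noteq> Vtx v"
  using loA by fastforce
lemma upA_nv: "a \<in> fE A \<Longrightarrow> v \<notin> fV A \<Longrightarrow> fup A a \<noteq> Vtx v"
  using upA by fastforce

lemma dist_e: "e1 \<noteq> e2" "d1 \<noteq> d2" "n \<noteq> k1" "n \<noteq> k2" "k1 \<noteq> k2"
  using a2 a5 a4 by auto

lemmas dd = dist_e dist_e[symmetric] newe newe[symmetric] ne_e ne_e[symmetric]
  newv newv[symmetric] gk gk[symmetric]

lemma loB_vals: "flo B e1 = Vtx k1" "flo B e2 = Vtx k2" "flo B e3 = Vtx n" "flo B d1 = Vtx k1" "flo B d2 = Vtx k2"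
  using loB EB a2 dd by auto
lemma upB_vals: "fup B d1 = Vtx n" "fup B d2 = Vtx n" "fup B e1 = fup A e1" "fup B e2 = fup A e2" "fup B e3 = fup A e3"
  using upB EB a2 dd by auto
lemma loB_oth: "a \<in> fE A \<Longrightarrow> a \<noteq> e \<Longrightarrow> a \<noteq> e1 \<Longrightarrow> a \<noteq> e2 \<Longrightarrow> a \<noteq> e3 \<Longrightarrow> flo B a = flo A a"
  using loB[of a] EB a5 by auto
lemma upB_oth: "a \<in> fE A \<Longrightarrow> a \<noteq> e \<Longrightarrow> fup B a = fup A a"
  using upB[of a] EB a5 by auto

lemma EB_cases:
  assumes "a \<in> fE B"
  obtains "a = d1" | "a = d2" | "a = e1" | "a = e2" | "a = e3"
   | "a \<in> fE A" "a \<noteq> e" "a \<noteq> e1" "a \<noteq> e2" "a \<noteq> e3" "a \<noteq> d1" "a \<noteq> d2"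
  using assms EB by blast

lemma EB_in: "e1 \<in> fE B" "e2 \<in> fE B" "e3 \<in> fE B" "d1 \<in> fE B" "d2 \<in> fE B" "e \<notin> fE B"
  using EB a2 dd a5 by auto

lemma loB_n: "a \<in> fE B \<Longrightarrow> flo B a = Vtx n \<longleftrightarrow> a = e3"
  by (erule EB_cases) (simp_all add: loB_vals upB_vals loB_oth upB_oth loA_nv upA_nv a4 a2 dd)
lemma loB_k1: "a \<in> fE B \<Longrightarrow> flo B a = Vtx k1 \<longleftrightarrow> a = e1 \<or> a = d1"
  by (erule EB_cases) (simp_all add: loB_vals upB_vals loB_oth upB_oth loA_nv upA_nv a4 a2 dd)
lemma loB_k2: "a \<in> fE B \<Longrightarrow> flo B a = Vtx k2 \<longleftrightarrow> a = e2 \<or> a = d2"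
  by (erule EB_cases) (simp_all add: loB_vals upB_vals loB_oth upB_oth loA_nv upA_nv a4 a2 dd)
lemma upB_n: "a \<in> fE B \<Longrightarrow> fup B a = Vtx n \<longleftrightarrow> a = d1 \<or> a = d2"
  by (erule EB_cases) (simp_all add: loB_vals upB_vals loB_oth upB_oth loA_nv upA_nv a4 a2 dd)
lemma upB_k1: "a \<in> fE B \<Longrightarrow> fup B a \<noteq> Vtx k1"
  by (erule EB_cases) (simp_all add: loB_vals upB_vals loB_oth upB_oth loA_nv upA_nv a4 a2 dd)
lemma upB_k2: "a \<in> fE B \<Longrightarrow> fup B a \<noteq> Vtx k2"
  by (erule EB_cases) (simp_all add: loB_vals upB_vals loB_oth upB_oth loA_nv upA_nv a4 a2 dd)

lemma loB_old: "a \<in> fE B \<Longrightarrow> v \<in> fV A \<Longrightarrow> v \<noteq> g \<Longrightarrow> v \<noteq> k \<Longrightarrow>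
   flo B a = Vtx v \<longleftrightarrow> a \<in> fE A \<and> a \<noteq> e \<and> flo A a = Vtx v"
  by (erule EB_cases) (use a4 a5 a3 a2 in \<open>auto simp add: loB_vals upB_vals loB_oth upB_oth dd\<close>)
lemma upB_old: "a \<in> fE B \<Longrightarrow> v \<in> fV A \<Longrightarrow> v \<noteq> g \<Longrightarrow> v \<noteq> k \<Longrightarrow>
   fup B a = Vtx v \<longleftrightarrow> a \<in> fE A \<and> a \<noteq> e \<and> fup A a = Vtx v"
  by (erule EB_cases) (use a4 a5 a3 a2 in \<open>auto simp add: loB_vals upB_vals loB_oth upB_oth dd\<close>)

definition NT :: "((nat \<times> bool) \<times> (nat \<times> bool)) set" where
  "NT = {((e3,True),(d1,True)), ((e3,True),(d2,True)), ((d1,False),(e3,False)), ((d2,False),(e3,False)),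
         ((e1,True),(d1,False)), ((d1,True),(e1,False)), ((e2,True),(d2,False)), ((d2,True),(e2,False))}"

definition OT :: "((nat \<times> bool) \<times> (nat \<times> bool)) set" where
  "OT = {((e1,True),(e,True)), ((e2,True),(e,True)), ((e,False),(e1,False)), ((e,False),(e2,False)),
         ((e,True),(e3,False)), ((e3,True),(e,False))}"

lemma trA_char: "tr A x y \<Longrightarrow> (tgt A x \<noteq> Vtx g \<and> tgt A x \<noteq> Vtx k) \<or> (x, y) \<in> OT"
proof -
  assume t: "tr A x y"
  obtain a d b d' where xy: "x = (a,d)" "y = (b,d')" by (cases x, cases y)
  have ab: "a \<in> fE A" "b \<in> fE A" and sv: "\<exists>v\<in>fV A. tgt A x = Vtx v \<and> src A y = Vtx v \<and> okt (flab A v) x y"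
    using t xy by (auto simp: tr_def)
  show ?thesis
  proof (cases "tgt A x = Vtx g")
    case True
    then have s: "src A y = Vtx g" and o: "d = d'" using sv a1 xy by (auto simp: okt_def)
    show ?thesis
    proof (cases d)
      case True
      then have "a = e1 \<or> a = e2" "b = e" using \<open>tgt A x = Vtx g\<close> s xy o inG'[OF ab(1)] outG'[OF ab(2)] by auto
      then show ?thesis using xy o True by (auto simp: OT_def)
    next
      case False
      then have "a = e" "b = e1 \<or> b = e2" using \<open>tgt A x = Vtx g\<close> s xy o outG'[OF ab(1)] inG'[OF ab(2)] by auto
      then show ?thesis using xy o False by (auto simp: OT_def)
    qed
  next
    case ng: False
    show ?thesis
    proof (cases "tgt A x = Vtx k")
      case True
      then have s: "src A y = Vtx k" and o: "d \<noteq> d'" "a \<noteq> b" using sv a1 xy by (auto simp: okt_def)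
      show ?thesis
      proof (cases d)
        case True
        then have "a = e \<or> a = e3" "b = e \<or> b = e3" using \<open>tgt A x = Vtx k\<close> s xy o inK'[OF ab(1)] inK'[OF ab(2)] by auto
        then show ?thesis using xy o True by (auto simp: OT_def)
      next
        case False
        then show ?thesis using \<open>tgt A x = Vtx k\<close> xy outK'[OF ab(1)] by auto
      qed
    qed (use ng in blast)
  qed
qed

lemma OT_tr: "p \<in> OT \<Longrightarrow> tr A (fst p) (snd p)"
  unfolding OT_def using a1 a2 a3 ne_e by (auto simp: tr_def okt_def)

lemma labB_old: "v \<in> fV A \<Longrightarrow> v \<noteq> g \<Longrightarrow> v \<noteq> k \<Longrightarrow> flab B v = flab A v \<and> v \<in> fV B"
  using labB[of v] VB a4 by auto
lemma labB_new: "flab B n = Cocontr" "flab B k1 = Cut" "flab B k2 = Cut"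
  "n \<in> fV B" "k1 \<in> fV B" "k2 \<in> fV B"
  using labB VB dist_e by auto

lemma tgtB_old: "fst x \<in> fE B \<Longrightarrow> v \<in> fV A \<Longrightarrow> v \<noteq> g \<Longrightarrow> v \<noteq> k \<Longrightarrow>
   tgt B x = Vtx v \<longleftrightarrow> fst x \<in> fE A \<and> fst x \<noteq> e \<and> tgt A x = Vtx v"
  by (cases x) (auto simp: loB_old upB_old)
lemma srcB_old: "fst x \<in> fE B \<Longrightarrow> v \<in> fV A \<Longrightarrow> v \<noteq> g \<Longrightarrow> v \<noteq> k \<Longrightarrow>
   src B x = Vtx v \<longleftrightarrow> fst x \<in> fE A \<and> fst x \<noteq> e \<and> src A x = Vtx v"
  by (cases x) (auto simp: loB_old upB_old)

lemma e_ends: "tgt A (e, d) = Vtx g \<or> tgt A (e, d) = Vtx k" "src A (e, d) = Vtx g \<or> src A (e, d) = Vtx k"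
  using a3 by auto

lemma trB_NT: "p \<in> NT \<Longrightarrow> tr B (fst p) (snd p)"
  unfolding NT_def using labB_new EB_in dd by (auto simp: tr_def okt_def loB_vals upB_vals)

lemma trB_old: "tr A x y \<Longrightarrow> tgt A x \<noteq> Vtx g \<Longrightarrow> tgt A x \<noteq> Vtx k \<Longrightarrow> tr B x y"
proof -
  assume t: "tr A x y" and n: "tgt A x \<noteq> Vtx g" "tgt A x \<noteq> Vtx k"
  obtain v where v: "v \<in> fV A" "tgt A x = Vtx v" "src A y = Vtx v" "okt (flab A v) x y"
    and f: "fst x \<in> fE A" "fst y \<in> fE A" using t by (auto simp: tr_def)
  have vg: "v \<noteq> g" "v \<noteq> k" using n v by auto
  have xe: "fst x \<noteq> e"
  proof
    assume "fst x = e" then have "x = (e, snd x)" by (metis prod.collapse)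
    then show False using e_ends(1)[of "snd x"] v vg by auto
  qed
  have ye: "fst y \<noteq> e"
  proof
    assume "fst y = e" then have "y = (e, snd y)" by (metis prod.collapse)
    then show False using e_ends(2)[of "snd y"] v vg by auto
  qed
  have fb: "fst x \<in> fE B" "fst y \<in> fE B" using f xe ye EB by auto
  have "tgt B x = Vtx v" using tgtB_old[OF fb(1) v(1) vg] f xe v by simp
  moreover have "src B y = Vtx v" using srcB_old[OF fb(2) v(1) vg] f ye v by simp
  ultimately show "tr B x y" using fb labB_old[OF v(1) vg] v(4) by (auto simp: tr_def)
qed

lemma trB_char: "tr B x y \<Longrightarrow> (tr A x y \<and> tgt A x \<noteq> Vtx g \<and> tgt A x \<noteq> Vtx k) \<or> (x, y) \<in> NT"
proof -
  assume t: "tr B x y"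
  obtain a d b d' where xy: "x = (a,d)" "y = (b,d')" by (cases x, cases y)
  obtain v where v: "v \<in> fV B" "tgt B x = Vtx v" "src B y = Vtx v" "okt (flab B v) x y"
    and f: "a \<in> fE B" "b \<in> fE B" using t xy by (auto simp: tr_def)
  consider "v \<in> fV A" "v \<noteq> g" "v \<noteq> k" | "v = n" | "v = k1" | "v = k2" using v VB by auto
  then show ?thesis
  proof cases
    case 1
    have "tgt A x = Vtx v" "src A y = Vtx v" "a \<in> fE A" "b \<in> fE A"
      using tgtB_old[of x v] srcB_old[of y v] 1 v f xy by auto
    then have "tr A x y" using v 1 labB_old[OF 1] xy by (auto simp: tr_def)
    then show ?thesis using \<open>tgt A x = Vtx v\<close> 1 by auto
  next
    case 2
    then have o: "d = d'" using v labB_new xy by (auto simp: okt_def)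
    show ?thesis using v(2,3) 2 o xy f by (cases d) (auto simp: NT_def loB_n upB_n)
  next
    case 3
    then have o: "d \<noteq> d'" "a \<noteq> b" using v labB_new xy by (auto simp: okt_def)
    show ?thesis using v(2,3) 3 o xy f upB_k1[of a] upB_k1[of b] by (cases d) (auto simp: NT_def loB_k1)
  next
    case 4
    then have o: "d \<noteq> d'" "a \<noteq> b" using v labB_new xy by (auto simp: okt_def)
    show ?thesis using v(2,3) 4 o xy f upB_k2[of a] upB_k2[of b] by (cases d) (auto simp: NT_def loB_k2)
  qed
qed

definition R1 :: "(nat \<times> bool) set" where "R1 = {d1, d2} \<times> UNIV"
definition phi1 :: "nat \<times> bool \<Rightarrow> nat \<times> bool" where
  "phi1 x = (if fst x \<in> {d1, d2} then (e, \<not> snd x) else x)"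
definition psi1 :: "node \<Rightarrow> node" where
  "psi1 m = (case m of Vtx v \<Rightarrow> (if v = n then Vtx k else if v = k1 \<or> v = k2 then Vtx g else Vtx v) | _ \<Rightarrow> m)"
definition pre1 :: "nat \<times> bool \<Rightarrow> nat \<times> bool" where
  "pre1 x = (if snd x then (e3, True) else (if fst x = d1 then (e1, True) else (e2, True)))"
definition suc1 :: "nat \<times> bool \<Rightarrow> nat \<times> bool" where
  "suc1 x = (if snd x then (if fst x = d1 then (e1, False) else (e2, False)) else (e3, False))"

lemma R1_cases:
  assumes "x \<in> R1"
  obtains "x = (d1, True)" | "x = (d2, True)" | "x = (d1, False)" | "x = (d2, False)"
  using assms unfolding R1_def by (cases x) (metis (full_types) SigmaE2 empty_iff insertE)

lemma NT_pre: "x \<in> R1 \<Longrightarrow> (p, x) \<in> NT \<longleftrightarrow> p = pre1 x"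
  by (erule R1_cases) (simp_all add: NT_def pre1_def dd)
lemma NT_suc: "x \<in> R1 \<Longrightarrow> (x, s) \<in> NT \<longleftrightarrow> s = suc1 x"
  by (erule R1_cases) (simp_all add: NT_def suc1_def dd)

lemma R1_inj: "x \<in> R1 \<Longrightarrow> x' \<in> R1 \<Longrightarrow> pre1 x = pre1 x' \<Longrightarrow> suc1 x = suc1 x' \<Longrightarrow> x = x'"
  by (erule R1_cases; erule R1_cases) (simp_all add: pre1_def suc1_def dd)

lemma R1_notA: "x \<in> R1 \<Longrightarrow> fst x \<notin> fE A"
  using a5 by (auto simp: R1_def)

lemma trB_R_pre: "x \<in> R1 \<Longrightarrow> tr B p x \<Longrightarrow> p = pre1 x"
  using trB_char[of p x] R1_notA[of x] NT_pre[of x p] by (auto simp: tr_def)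
lemma trB_R_suc: "x \<in> R1 \<Longrightarrow> tr B x s \<Longrightarrow> s = suc1 x"
  using trB_char[of x s] R1_notA[of x] NT_suc[of x s] by (auto simp: tr_def)

lemma pre_suc_notR: "x \<in> R1 \<Longrightarrow> pre1 x \<notin> R1 \<and> suc1 x \<notin> R1"
  by (erule R1_cases) (simp_all add: R1_def pre1_def suc1_def dd)

lemma phi_notR: "x \<notin> R1 \<Longrightarrow> phi1 x = x"
  by (cases x) (auto simp: phi1_def R1_def)

lemma psi_old: "m = Top \<or> m = Bot \<or> (\<exists>v\<in>fV A. m = Vtx v) \<Longrightarrow> psi1 m = m"
  using a4 by (auto simp: psi1_def)

lemma upA': "a \<in> fE A \<Longrightarrow> psi1 (fup A a) = fup A a" using upA psi_old by blast
lemma loA': "a \<in> fE A \<Longrightarrow> psi1 (flo A a) = flo A a" using loA psi_old by blast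

lemma psi_vals: "psi1 (Vtx n) = Vtx k" "psi1 (Vtx k1) = Vtx g" "psi1 (Vtx k2) = Vtx g"
  using dist_e by (auto simp: psi1_def)

lemma sim1: "sim A B phi1 psi1 R1"
proof
  show "finite (fE A)" by (rule finEA)
  show "finite (fE B)" using EB finEA by simp
  show "NC A" by (rule ncA)
  show "\<And>x. x \<in> OE B \<Longrightarrow> phi1 x \<in> OE A"
    using EB a2 by (auto simp: OE_def phi1_def)
  show "\<And>x y. tr B x y \<Longrightarrow> tr A (phi1 x) (phi1 y)"
  proof -
    fix x y assume t: "tr B x y"
    show "tr A (phi1 x) (phi1 y)"
    proof (cases "(x, y) \<in> NT")
      case True
      then have "(phi1 x, phi1 y) \<in> OT" unfolding NT_def by (elim insertE emptyE) (simp_all add: OT_def phi1_def dd)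
      then show ?thesis using OT_tr by fastforce
    next
      case False
      then have "tr A x y" using trB_char[OF t] by blast
      then have "phi1 x = x" "phi1 y = y" using a5 by (auto simp: phi1_def tr_def)
      then show ?thesis using \<open>tr A x y\<close> by simp
    qed
  qed
  show "\<And>x. x \<in> OE B \<Longrightarrow> src A (phi1 x) = psi1 (src B x) \<and> tgt A (phi1 x) = psi1 (tgt B x)"
  proof -
    fix x assume "x \<in> OE B"
    then obtain a d where x: "x = (a, d)" "a \<in> fE B" by (auto simp: OE_def)
    show "src A (phi1 x) = psi1 (src B x) \<and> tgt A (phi1 x) = psi1 (tgt B x)"
      using x(2)
    proof (cases rule: EB_cases)
    qed (simp_all add: x phi1_def psi_vals loB_vals upB_vals loB_oth upB_oth upA' loA' a2 a3 dd)
  qed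
  show "\<And>v. \<exists>u. psi1 (Vtx v) = Vtx u" by (auto simp: psi1_def)
  show "R1 \<subseteq> OE B" "R1 \<noteq> {}" using EB by (auto simp: R1_def OE_def)
  show "\<And>x. x \<in> R1 \<Longrightarrow> (\<exists>p. tr B p x) \<and> (\<exists>s. tr B x s)"
  proof -
    fix x assume "x \<in> R1"
    then have "tr B (pre1 x) x" "tr B x (suc1 x)"
      using trB_NT[of "(pre1 x, x)"] NT_pre[of x "pre1 x"] trB_NT[of "(x, suc1 x)"] NT_suc[of x "suc1 x"] by auto
    then show "(\<exists>p. tr B p x) \<and> (\<exists>s. tr B x s)" by blast
  qed
  show "\<And>x y. x \<in> OE B \<Longrightarrow> y \<in> OE B \<Longrightarrow> x \<noteq> y \<Longrightarrow> phi1 x = phi1 y \<Longrightarrow> x \<in> R1 \<and> y \<in> R1"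
    using EB_in by (auto simp: phi1_def R1_def OE_def split: if_splits)
  show "\<And>x x' p p' s s'. x \<in> R1 \<Longrightarrow> x' \<in> R1 \<Longrightarrow> phi1 x = phi1 x' \<Longrightarrow> tr B p x \<Longrightarrow> tr B p' x'
            \<Longrightarrow> tr B x s \<Longrightarrow> tr B x' s' \<Longrightarrow> phi1 p = phi1 p' \<Longrightarrow> phi1 s = phi1 s' \<Longrightarrow> x = x'"
  proof -
    fix x x' p p' s s'
    assume r: "x \<in> R1" "x' \<in> R1" and ph: "phi1 x = phi1 x'" and t: "tr B p x" "tr B p' x'" "tr B x s" "tr B x' s'"
      and ps: "phi1 p = phi1 p'" "phi1 s = phi1 s'"
    have "p = pre1 x" "p' = pre1 x'" "s = suc1 x" "s' = suc1 x'"
      using trB_R_pre trB_R_suc r t by auto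
    moreover have "phi1 (pre1 x) = pre1 x" "phi1 (suc1 x) = suc1 x" "phi1 (pre1 x') = pre1 x'" "phi1 (suc1 x') = suc1 x'"
      using pre_suc_notR[OF r(1)] pre_suc_notR[OF r(2)] phi_notR by auto
    ultimately have "pre1 x = pre1 x'" "suc1 x = suc1 x'" using ps by auto
    then show "x = x'" using r R1_inj by blast
  qed
  show "\<And>x y. x \<in> OE B \<Longrightarrow> x \<notin> R1 \<Longrightarrow> tr A y (phi1 x) \<Longrightarrow> \<exists>y'. tr B y' x"
  proof -
    fix x y assume x: "x \<in> OE B" "x \<notin> R1" and t: "tr A y (phi1 x)"
    have px: "phi1 x = x" using x phi_notR by auto
    show "\<exists>y'. tr B y' x"
    proof (cases "(y, x) \<in> OT")
      case True
      have "fst x \<noteq> e" using x EB_in by (auto simp: OE_def)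
      then have "x \<in> {(e3,False),(e1,False),(e2,False)}" using True by (auto simp: OT_def)
      then show ?thesis
        using trB_NT[of "((d1,False),(e3,False))"] trB_NT[of "((d1,True),(e1,False))"]
          trB_NT[of "((d2,True),(e2,False))"]
        by (auto simp: NT_def dd)
    next
      case False
      then show ?thesis using trA_char[of y x] t px trB_old[of y x] by (cases y) auto
    qed
  qed
  show "\<And>x y. x \<in> OE B \<Longrightarrow> x \<notin> R1 \<Longrightarrow> tr A (phi1 x) y \<Longrightarrow> \<exists>y'. tr B x y'"
  proof -
    fix x y assume x: "x \<in> OE B" "x \<notin> R1" and t: "tr A (phi1 x) y"
    have px: "phi1 x = x" using x phi_notR by auto
    show "\<exists>y'. tr B x y'"
    proof (cases "(x, y) \<in> OT")
      case True
      have "fst x \<noteq> e" using x EB_in by (auto simp: OE_def)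
      then have "x \<in> {(e1,True),(e2,True),(e3,True)}" using True by (auto simp: OT_def)
      then show ?thesis
        using trB_NT[of "((e1,True),(d1,False))"] trB_NT[of "((e2,True),(d2,False))"]
          trB_NT[of "((e3,True),(d1,True))"]
        by (auto simp: NT_def dd)
    next
      case False
      then show ?thesis using trA_char[of x y] t px trB_old[of x y] by (cases y) auto
    qed
  qed
  show "\<And>x y. tr B x y \<Longrightarrow> x \<notin> R1 \<Longrightarrow> y \<notin> R1 \<Longrightarrow> ttyp A (phi1 x) (phi1 y) = ttyp B x y"
  proof -
    fix x y assume t: "tr B x y" and nr: "x \<notin> R1" "y \<notin> R1"
    have "(x, y) \<notin> NT" using nr by (auto simp: NT_def R1_def)
    then have t2: "tr A x y" "tgt A x \<noteq> Vtx g" "tgt A x \<noteq> Vtx k" using trB_char[OF t] by auto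
    have px: "phi1 x = x" "phi1 y = y" using nr phi_notR by auto
    obtain v where v: "v \<in> fV A" "tgt A x = Vtx v" using t2 by (auto simp: tr_def)
    have vg: "v \<noteq> g" "v \<noteq> k" using v t2 by auto
    have fx: "fst x \<in> fE B" using t by (auto simp: tr_def)
    have "fst x \<noteq> e" using fx EB_in by auto
    then have "tgt B x = Vtx v" using tgtB_old[OF fx v(1) vg] v t2 by (auto simp: tr_def)
    then show "ttyp A (phi1 x) (phi1 y) = ttyp B x y"
      using px v labB_old[OF v(1) vg] by (simp add: ttyp_def)
  qed
  show "\<And>x p s. x \<in> R1 \<Longrightarrow> tr B p x \<Longrightarrow> tr B x s \<Longrightarrow>
     p \<notin> R1 \<and> s \<notin> R1 \<and> ttyp B p x < ttyp B x s \<and> ttyp A (phi1 p) (phi1 x) = ttyp B x s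
     \<and> ttyp A (phi1 x) (phi1 s) = ttyp B p x"
  proof -
    fix x p s assume r: "x \<in> R1" and t: "tr B p x" "tr B x s"
    have ps: "p = pre1 x" "s = suc1 x" using trB_R_pre trB_R_suc r t by auto
    have nr: "p \<notin> R1" "s \<notin> R1" using pre_suc_notR[OF r] ps by auto
    have "ttyp B p x < ttyp B x s \<and> ttyp A (phi1 p) (phi1 x) = ttyp B x s
     \<and> ttyp A (phi1 x) (phi1 s) = ttyp B p x"
      unfolding ps using r
      by (elim R1_cases) (simp_all add: a1 a3 labB_new pre1_def suc1_def phi1_def ttyp_def loB_vals upB_vals dd)
    then show "p \<notin> R1 \<and> s \<notin> R1 \<and> ttyp B p x < ttyp B x s \<and> ttyp A (phi1 p) (phi1 x) = ttyp B x s
     \<and> ttyp A (phi1 x) (phi1 s) = ttyp B p x" using nr by blast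
  qed
qed


lemma VB_old: "v \<in> fV A \<Longrightarrow> v \<noteq> g \<Longrightarrow> v \<noteq> k \<Longrightarrow> v \<in> fV B" using VB by auto

lemma epB: "endpoints_ok B"
  unfolding endpoints_ok_def
proof
  fix a assume a: "a \<in> fE B"
  have old: "\<And>m. m = Top \<or> m = Bot \<or> (\<exists>v\<in>fV A. m = Vtx v) \<Longrightarrow> m \<noteq> Vtx g \<Longrightarrow> m \<noteq> Vtx k \<Longrightarrow>
     m = Top \<or> m = Bot \<or> m \<in> Vtx ` fV B" using VB_old by blast
  have nv: "Vtx n \<in> Vtx ` fV B" "Vtx k1 \<in> Vtx ` fV B" "Vtx k2 \<in> Vtx ` fV B"
    using labB_new by auto
  have upok: "\<And>a. a \<in> fE A \<Longrightarrow> a \<noteq> e \<Longrightarrow> fup A a = Top \<or> fup A a \<in> Vtx ` fV B"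
  proof -
    fix a assume "a \<in> fE A" "a \<noteq> e"
    then have "fup A a \<noteq> Vtx g" "fup A a \<noteq> Vtx k" using outG' outK' by auto
    then show "fup A a = Top \<or> fup A a \<in> Vtx ` fV B" using old[of "fup A a"] upA[OF \<open>a \<in> fE A\<close>] by auto
  qed
  show "fup B a \<in> {Top} \<union> Vtx ` fV B \<and> flo B a \<in> {Bot} \<union> Vtx ` fV B"
    using a
  proof (cases rule: EB_cases)
    case 3 then show ?thesis using nv upok[of e1] a2 loB_vals upB_vals dd by auto
  next
    case 4 then show ?thesis using nv upok[of e2] a2 loB_vals upB_vals dd by auto
  next
    case 5 then show ?thesis using nv upok[of e3] a2 loB_vals upB_vals dd by auto
  next
    case 6
    have "flo A a \<noteq> Vtx g" "flo A a \<noteq> Vtx k"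
      using inG'[OF 6(1)] inK'[OF 6(1)] 6 by auto
    then show ?thesis using 6 old[of "flo A a"] upok[of a] loA[OF 6(1)]
      loB_oth[OF 6(1)] upB_oth[OF 6(1)] by auto
  qed (use nv loB_vals upB_vals in auto)
qed

lemma set_old_lo: assumes "v \<in> fV A" "v \<noteq> g" "v \<noteq> k"
  shows "{a\<in>fE B. flo B a = Vtx v} = {a\<in>fE A. flo A a = Vtx v}"
proof (intro set_eqI iffI)
  fix a assume "a \<in> {a\<in>fE B. flo B a = Vtx v}" then show "a \<in> {a\<in>fE A. flo A a = Vtx v}"
    using loB_old[of a v] assms by auto
next
  fix a assume a: "a \<in> {a\<in>fE A. flo A a = Vtx v}"
  then have "a \<noteq> e" using a3 assms by auto
  then have "a \<in> fE B" using a EB by auto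
  then show "a \<in> {a\<in>fE B. flo B a = Vtx v}" using loB_old[of a v] assms a \<open>a \<noteq> e\<close> by auto
qed
lemma set_old_up: assumes "v \<in> fV A" "v \<noteq> g" "v \<noteq> k"
  shows "{a\<in>fE B. fup B a = Vtx v} = {a\<in>fE A. fup A a = Vtx v}"
proof (intro set_eqI iffI)
  fix a assume "a \<in> {a\<in>fE B. fup B a = Vtx v}" then show "a \<in> {a\<in>fE A. fup A a = Vtx v}"
    using upB_old[of a v] assms by auto
next
  fix a assume a: "a \<in> {a\<in>fE A. fup A a = Vtx v}"
  then have "a \<noteq> e" using a3 assms by auto
  then have "a \<in> fE B" using a EB by auto
  then show "a \<in> {a\<in>fE B. fup B a = Vtx v}" using upB_old[of a v] assms a \<open>a \<noteq> e\<close> by auto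
qed

lemma cardsB: "cards B"
  unfolding cards_def
proof
  fix v assume v: "v \<in> fV B"
  consider "v \<in> fV A" "v \<noteq> g" "v \<noteq> k" | "v = n" | "v = k1" | "v = k2" using v VB by auto
  then show "card {e\<in>fE B. flo B e = Vtx v} = upper_count (flab B v) \<and> card {e\<in>fE B. fup B e = Vtx v} = lower_count (flab B v)"
  proof cases
    case 1
    then show ?thesis using set_old_lo[OF 1] set_old_up[OF 1] labB_old[OF 1] cardsA unfolding cards_def by auto
  next
    case 2
    have h1: "{a\<in>fE B. flo B a = Vtx v} = {e3}" and h2: "{a\<in>fE B. fup B a = Vtx v} = {d1, d2}"
      using 2 loB_n upB_n EB_in by auto
    show ?thesis unfolding h1 h2 using 2 labB_new dd by simp
  next
    case 3
    have h1: "{a\<in>fE B. flo B a = Vtx v} = {e1, d1}" and h2: "{a\<in>fE B. fup B a = Vtx v} = {}"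
      using 3 loB_k1 upB_k1 EB_in by auto
    show ?thesis unfolding h1 h2 using 3 labB_new dd by simp
  next
    case 4
    have h1: "{a\<in>fE B. flo B a = Vtx v} = {e2, d2}" and h2: "{a\<in>fE B. fup B a = Vtx v} = {}"
      using 4 loB_k2 upB_k2 EB_in by auto
    show ?thesis unfolding h1 h2 using 4 labB_new dd by simp
  qed
qed

lemma main1: "Inv B \<and> M B < M A"
proof -
  interpret S: sim A B phi1 psi1 R1 by (rule sim1)
  have "finite (fV B)" using VB finVA by simp
  moreover have "finite (fE B)" using EB finEA by simp
  ultimately show ?thesis using S.ncB S.M_less epB cardsB by (simp add: Inv_def)
qed

end

lemma c1_main: "c1_step A B \<Longrightarrow> Inv A \<Longrightarrow> Inv B \<and> M B < M A"
  unfolding c1_step_def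
  apply (elim exE conjE)
  subgoal premises p for g k e1 e2 e e3 n k1 k2 d1 d2
  proof -
    interpret c1 A B g k e1 e2 e e3 n k1 k2 d1 d2
      by (unfold_locales) (use p in auto)
    show ?thesis by (rule main1)
  qed
  done



locale c2 =
  fixes A B :: flow and i k e1 e2 e3 e4 g i1 i2 d1 d2 :: nat
  assumes invA: "Inv A"
  and a1: "i \<in> fV A" "flab A i = Interaction" "k \<in> fV A" "flab A k = Cocontr"
  and a2: "e1 \<in> fE A" "e2 \<in> fE A" "e3 \<in> fE A" "e4 \<in> fE A"
  and a3: "fup A e3 = Vtx i" "fup A e4 = Vtx i" "e3 \<noteq> e4" "flo A e4 = Vtx k"
     "fup A e1 = Vtx k" "fup A e2 = Vtx k" "e1 \<noteq> e2"
  and a4: "g \<notin> fV A" "i1 \<notin> fV A" "i2 \<notin> fV A" "distinct [g, i1, i2]"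
  and a5: "d1 \<notin> fE A" "d2 \<notin> fE A" "d1 \<noteq> d2"
  and ag: "agrees B ((fV A - {i, k}) \<union> {g, i1, i2}) ((fE A - {e4}) \<union> {d1, d2})
       ((flab A)(g := Contr, i1 := Interaction, i2 := Interaction))
       ((fup A)(e3 := Vtx g, e1 := Vtx i1, e2 := Vtx i2, d1 := Vtx i1, d2 := Vtx i2))
       ((flo A)(d1 := Vtx g, d2 := Vtx g))"
begin

lemma finVA: "finite (fV A)" and finEA: "finite (fE A)" and epA: "endpoints_ok A"
  and cardsA: "cards A" and ncA: "NC A"
  using invA by (auto simp: Inv_def)

lemma ik: "i \<noteq> k" using a1 by auto

lemma outI: "{a\<in>fE A. fup A a = Vtx i} = {e3, e4}"
  using cardsA a1 a2 a3 finEA unfolding cards_def by (intro card2_eq) auto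
lemma inI: "{a\<in>fE A. flo A a = Vtx i} = {}"
  using cardsA a1 a2 a3 finEA unfolding cards_def by (intro card0_eq) auto
lemma inK: "{a\<in>fE A. flo A a = Vtx k} = {e4}"
  using cardsA a1 a2 a3 finEA unfolding cards_def by (intro card1_eq) auto
lemma outK: "{a\<in>fE A. fup A a = Vtx k} = {e1, e2}"
  using cardsA a1 a2 a3 finEA unfolding cards_def by (intro card2_eq) auto

lemma outI': "a \<in> fE A \<Longrightarrow> fup A a = Vtx i \<longleftrightarrow> a = e3 \<or> a = e4" using outI a3 by blast
lemma inI': "a \<in> fE A \<Longrightarrow> flo A a \<noteq> Vtx i" using inI by blast
lemma inK': "a \<in> fE A \<Longrightarrow> flo A a = Vtx k \<longleftrightarrow> a = e4" using inK a3 by blast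
lemma outK': "a \<in> fE A \<Longrightarrow> fup A a = Vtx k \<longleftrightarrow> a = e1 \<or> a = e2" using outK a3 by blast

lemma upA: "a \<in> fE A \<Longrightarrow> fup A a = Top \<or> (\<exists>v\<in>fV A. fup A a = Vtx v)"
  using epA by (auto simp: endpoints_ok_def)
lemma loA: "a \<in> fE A \<Longrightarrow> flo A a = Bot \<or> (\<exists>v\<in>fV A. flo A a = Vtx v)"
  using epA by (auto simp: endpoints_ok_def)

lemma ne_e: "e4 \<noteq> e1" "e4 \<noteq> e2" "e4 \<noteq> e3" "e1 \<noteq> e3" "e2 \<noteq> e3"
  using a3 ik by auto

lemma newv: "g \<noteq> i" "g \<noteq> k" "i1 \<noteq> i" "i1 \<noteq> k" "i2 \<noteq> i" "i2 \<noteq> k"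
  using a1 a4 by auto
lemma newe: "d1 \<noteq> e4" "d2 \<noteq> e4" "d1 \<noteq> e1" "d2 \<noteq> e1" "d1 \<noteq> e2" "d2 \<noteq> e2" "d1 \<noteq> e3" "d2 \<noteq> e3"
  using a2 a5 by auto

lemma VB: "fV B = (fV A - {i, k}) \<union> {g, i1, i2}" and EB: "fE B = (fE A - {e4}) \<union> {d1, d2}"
  using ag by (auto simp: agrees_def)

lemma labB: "v \<in> fV B \<Longrightarrow> flab B v = ((flab A)(g := Contr, i1 := Interaction, i2 := Interaction)) v"
  using ag by (auto simp: agrees_def)
lemma upB: "a \<in> fE B \<Longrightarrow> fup B a = ((fup A)(e3 := Vtx g, e1 := Vtx i1, e2 := Vtx i2, d1 := Vtx i1, d2 := Vtx i2)) a"
  using ag by (auto simp: agrees_def)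
lemma loB: "a \<in> fE B \<Longrightarrow> flo B a = ((flo A)(d1 := Vtx g, d2 := Vtx g)) a"
  using ag by (auto simp: agrees_def)

lemma loA_nv: "a \<in> fE A \<Longrightarrow> v \<notin> fV A \<Longrightarrow> flo A a \<noteq> Vtx v"
  using loA by fastforce
lemma upA_nv: "a \<in> fE A \<Longrightarrow> v \<notin> fV A \<Longrightarrow> fup A a \<noteq> Vtx v"
  using upA by fastforce

lemma dist_e: "e1 \<noteq> e2" "d1 \<noteq> d2" "g \<noteq> i1" "g \<noteq> i2" "i1 \<noteq> i2" "e3 \<noteq> e4"
  using a3 a5 a4 by auto

lemmas dd = dist_e dist_e[symmetric] newe newe[symmetric] ne_e ne_e[symmetric]
  newv newv[symmetric] ik ik[symmetric]

lemma loB_vals: "flo B d1 = Vtx g" "flo B d2 = Vtx g" "flo B e1 = flo A e1" "flo B e2 = flo A e2" "flo B e3 = flo A e3"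
  using loB EB a2 dd by auto
lemma upB_vals: "fup B e3 = Vtx g" "fup B e1 = Vtx i1" "fup B e2 = Vtx i2" "fup B d1 = Vtx i1" "fup B d2 = Vtx i2"
  using upB EB a2 dd by auto
lemma loB_oth: "a \<in> fE A \<Longrightarrow> a \<noteq> e4 \<Longrightarrow> flo B a = flo A a"
  using loB[of a] EB a5 by auto
lemma upB_oth: "a \<in> fE A \<Longrightarrow> a \<noteq> e4 \<Longrightarrow> a \<noteq> e1 \<Longrightarrow> a \<noteq> e2 \<Longrightarrow> a \<noteq> e3 \<Longrightarrow> fup B a = fup A a"
  using upB[of a] EB a5 by auto

lemma EB_cases:
  assumes "a \<in> fE B"
  obtains "a = d1" | "a = d2" | "a = e1" | "a = e2" | "a = e3"
   | "a \<in> fE A" "a \<noteq> e4" "a \<noteq> e1" "a \<noteq> e2" "a \<noteq> e3" "a \<noteq> d1" "a \<noteq> d2"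
  using assms EB by blast

lemma EB_in: "e1 \<in> fE B" "e2 \<in> fE B" "e3 \<in> fE B" "d1 \<in> fE B" "d2 \<in> fE B" "e4 \<notin> fE B"
  using EB a2 dd a5 by auto

lemma loB_g: "a \<in> fE B \<Longrightarrow> flo B a = Vtx g \<longleftrightarrow> a = d1 \<or> a = d2"
  by (erule EB_cases) (simp_all add: loB_vals upB_vals loB_oth upB_oth loA_nv upA_nv a4 a2 dd)
lemma upB_g: "a \<in> fE B \<Longrightarrow> fup B a = Vtx g \<longleftrightarrow> a = e3"
  by (erule EB_cases) (simp_all add: loB_vals upB_vals loB_oth upB_oth loA_nv upA_nv a4 a2 dd)
lemma upB_i1: "a \<in> fE B \<Longrightarrow> fup B a = Vtx i1 \<longleftrightarrow> a = e1 \<or> a = d1"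
  by (erule EB_cases) (simp_all add: loB_vals upB_vals loB_oth upB_oth loA_nv upA_nv a4 a2 dd)
lemma upB_i2: "a \<in> fE B \<Longrightarrow> fup B a = Vtx i2 \<longleftrightarrow> a = e2 \<or> a = d2"
  by (erule EB_cases) (simp_all add: loB_vals upB_vals loB_oth upB_oth loA_nv upA_nv a4 a2 dd)
lemma loB_i1: "a \<in> fE B \<Longrightarrow> flo B a \<noteq> Vtx i1"
  by (erule EB_cases) (simp_all add: loB_vals upB_vals loB_oth upB_oth loA_nv upA_nv a4 a2 dd)
lemma loB_i2: "a \<in> fE B \<Longrightarrow> flo B a \<noteq> Vtx i2"
  by (erule EB_cases) (simp_all add: loB_vals upB_vals loB_oth upB_oth loA_nv upA_nv a4 a2 dd)

lemma loB_old: "a \<in> fE B \<Longrightarrow> v \<in> fV A \<Longrightarrow> v \<noteq> i \<Longrightarrow> v \<noteq> k \<Longrightarrow>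
   flo B a = Vtx v \<longleftrightarrow> a \<in> fE A \<and> a \<noteq> e4 \<and> flo A a = Vtx v"
  by (erule EB_cases) (use a4 a5 a3 a2 in \<open>auto simp add: loB_vals upB_vals loB_oth upB_oth dd\<close>)
lemma upB_old: "a \<in> fE B \<Longrightarrow> v \<in> fV A \<Longrightarrow> v \<noteq> i \<Longrightarrow> v \<noteq> k \<Longrightarrow>
   fup B a = Vtx v \<longleftrightarrow> a \<in> fE A \<and> a \<noteq> e4 \<and> fup A a = Vtx v"
  by (erule EB_cases) (use a4 a5 a3 a2 in \<open>auto simp add: loB_vals upB_vals loB_oth upB_oth dd\<close>)

definition NT :: "((nat \<times> bool) \<times> (nat \<times> bool)) set" where
  "NT = {((d1,True),(e3,True)), ((d2,True),(e3,True)), ((e3,False),(d1,False)), ((e3,False),(d2,False)),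
         ((d1,False),(e1,True)), ((e1,False),(d1,True)), ((d2,False),(e2,True)), ((e2,False),(d2,True))}"

definition OT :: "((nat \<times> bool) \<times> (nat \<times> bool)) set" where
  "OT = {((e3,False),(e4,True)), ((e4,False),(e3,True)), ((e4,True),(e1,True)), ((e4,True),(e2,True)),
         ((e1,False),(e4,False)), ((e2,False),(e4,False))}"

lemma trA_char: "tr A x y \<Longrightarrow> (tgt A x \<noteq> Vtx i \<and> tgt A x \<noteq> Vtx k) \<or> (x, y) \<in> OT"
proof -
  assume t: "tr A x y"
  obtain a d b d' where xy: "x = (a,d)" "y = (b,d')" by (cases x, cases y)
  have ab: "a \<in> fE A" "b \<in> fE A" and sv: "\<exists>v\<in>fV A. tgt A x = Vtx v \<and> src A y = Vtx v \<and> okt (flab A v) x y"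
    using t xy by (auto simp: tr_def)
  show ?thesis
  proof (cases "tgt A x = Vtx i")
    case True
    then have s: "src A y = Vtx i" and o: "d \<noteq> d'" "a \<noteq> b" using sv a1 xy by (auto simp: okt_def)
    show ?thesis
    proof (cases d)
      case True
      then show ?thesis using \<open>tgt A x = Vtx i\<close> xy inI'[OF ab(1)] by auto
    next
      case False
      then have "a = e3 \<or> a = e4" "b = e3 \<or> b = e4" using \<open>tgt A x = Vtx i\<close> s xy o outI'[OF ab(1)] outI'[OF ab(2)] by auto
      then show ?thesis using xy o False by (auto simp: OT_def)
    qed
  next
    case ng: False
    show ?thesis
    proof (cases "tgt A x = Vtx k")
      case True
      then have s: "src A y = Vtx k" and o: "d = d'" using sv a1 xy by (auto simp: okt_def)
      show ?thesis
      proof (cases d)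
        case True
        then have "a = e4" "b = e1 \<or> b = e2" using \<open>tgt A x = Vtx k\<close> s xy o inK'[OF ab(1)] outK'[OF ab(2)] by auto
        then show ?thesis using xy o True by (auto simp: OT_def)
      next
        case False
        then have "a = e1 \<or> a = e2" "b = e4" using \<open>tgt A x = Vtx k\<close> s xy o outK'[OF ab(1)] inK'[OF ab(2)] by auto
        then show ?thesis using xy o False by (auto simp: OT_def)
      qed
    qed (use ng in blast)
  qed
qed

lemma OT_tr: "p \<in> OT \<Longrightarrow> tr A (fst p) (snd p)"
  unfolding OT_def using a1 a2 a3 ne_e by (auto simp: tr_def okt_def)

lemma labB_old: "v \<in> fV A \<Longrightarrow> v \<noteq> i \<Longrightarrow> v \<noteq> k \<Longrightarrow> flab B v = flab A v \<and> v \<in> fV B"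
  using labB[of v] VB a4 by auto
lemma labB_new: "flab B g = Contr" "flab B i1 = Interaction" "flab B i2 = Interaction"
  "g \<in> fV B" "i1 \<in> fV B" "i2 \<in> fV B"
  using labB VB dist_e by auto

lemma tgtB_old: "fst x \<in> fE B \<Longrightarrow> v \<in> fV A \<Longrightarrow> v \<noteq> i \<Longrightarrow> v \<noteq> k \<Longrightarrow>
   tgt B x = Vtx v \<longleftrightarrow> fst x \<in> fE A \<and> fst x \<noteq> e4 \<and> tgt A x = Vtx v"
  by (cases x) (auto simp: loB_old upB_old)
lemma srcB_old: "fst x \<in> fE B \<Longrightarrow> v \<in> fV A \<Longrightarrow> v \<noteq> i \<Longrightarrow> v \<noteq> k \<Longrightarrow>
   src B x = Vtx v \<longleftrightarrow> fst x \<in> fE A \<and> fst x \<noteq> e4 \<and> src A x = Vtx v"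
  by (cases x) (auto simp: loB_old upB_old)

lemma e_ends: "tgt A (e4, d) = Vtx i \<or> tgt A (e4, d) = Vtx k" "src A (e4, d) = Vtx i \<or> src A (e4, d) = Vtx k"
  using a3 by auto

lemma trB_NT: "p \<in> NT \<Longrightarrow> tr B (fst p) (snd p)"
  unfolding NT_def using labB_new EB_in dd by (auto simp: tr_def okt_def loB_vals upB_vals)

lemma trB_old: "tr A x y \<Longrightarrow> tgt A x \<noteq> Vtx i \<Longrightarrow> tgt A x \<noteq> Vtx k \<Longrightarrow> tr B x y"
proof -
  assume t: "tr A x y" and n: "tgt A x \<noteq> Vtx i" "tgt A x \<noteq> Vtx k"
  obtain v where v: "v \<in> fV A" "tgt A x = Vtx v" "src A y = Vtx v" "okt (flab A v) x y"
    and f: "fst x \<in> fE A" "fst y \<in> fE A" using t by (auto simp: tr_def)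
  have vg: "v \<noteq> i" "v \<noteq> k" using n v by auto
  have xe: "fst x \<noteq> e4"
  proof
    assume "fst x = e4" then have "x = (e4, snd x)" by (metis prod.collapse)
    then show False using e_ends(1)[of "snd x"] v vg by auto
  qed
  have ye: "fst y \<noteq> e4"
  proof
    assume "fst y = e4" then have "y = (e4, snd y)" by (metis prod.collapse)
    then show False using e_ends(2)[of "snd y"] v vg by auto
  qed
  have fb: "fst x \<in> fE B" "fst y \<in> fE B" using f xe ye EB by auto
  have "tgt B x = Vtx v" using tgtB_old[OF fb(1) v(1) vg] f xe v by simp
  moreover have "src B y = Vtx v" using srcB_old[OF fb(2) v(1) vg] f ye v by simp
  ultimately show "tr B x y" using fb labB_old[OF v(1) vg] v(4) by (auto simp: tr_def)
qed

lemma trB_char: "tr B x y \<Longrightarrow> (tr A x y \<and> tgt A x \<noteq> Vtx i \<and> tgt A x \<noteq> Vtx k) \<or> (x, y) \<in> NT"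
proof -
  assume t: "tr B x y"
  obtain a d b d' where xy: "x = (a,d)" "y = (b,d')" by (cases x, cases y)
  obtain v where v: "v \<in> fV B" "tgt B x = Vtx v" "src B y = Vtx v" "okt (flab B v) x y"
    and f: "a \<in> fE B" "b \<in> fE B" using t xy by (auto simp: tr_def)
  consider "v \<in> fV A" "v \<noteq> i" "v \<noteq> k" | "v = g" | "v = i1" | "v = i2" using v VB by auto
  then show ?thesis
  proof cases
    case 1
    have "tgt A x = Vtx v" "src A y = Vtx v" "a \<in> fE A" "b \<in> fE A"
      using tgtB_old[of x v] srcB_old[of y v] 1 v f xy by auto
    then have "tr A x y" using v 1 labB_old[OF 1] xy by (auto simp: tr_def)
    then show ?thesis using \<open>tgt A x = Vtx v\<close> 1 by auto
  next
    case 2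
    then have o: "d = d'" using v labB_new xy by (auto simp: okt_def)
    show ?thesis using v(2,3) 2 o xy f by (cases d) (auto simp: NT_def loB_g upB_g)
  next
    case 3
    then have o: "d \<noteq> d'" "a \<noteq> b" using v labB_new xy by (auto simp: okt_def)
    show ?thesis using v(2,3) 3 o xy f loB_i1[of a] loB_i1[of b] by (cases d) (auto simp: NT_def upB_i1)
  next
    case 4
    then have o: "d \<noteq> d'" "a \<noteq> b" using v labB_new xy by (auto simp: okt_def)
    show ?thesis using v(2,3) 4 o xy f loB_i2[of a] loB_i2[of b] by (cases d) (auto simp: NT_def upB_i2)
  qed
qed

definition R2 :: "(nat \<times> bool) set" where "R2 = {d1, d2} \<times> UNIV"
definition phi2 :: "nat \<times> bool \<Rightarrow> nat \<times> bool" where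
  "phi2 x = (if fst x \<in> {d1, d2} then (e4, \<not> snd x) else x)"
definition psi2 :: "node \<Rightarrow> node" where
  "psi2 m = (case m of Vtx v \<Rightarrow> (if v = g then Vtx i else if v = i1 \<or> v = i2 then Vtx k else Vtx v) | _ \<Rightarrow> m)"
definition pre2 :: "nat \<times> bool \<Rightarrow> nat \<times> bool" where
  "pre2 x = (if snd x then (if fst x = d1 then (e1, False) else (e2, False)) else (e3, False))"
definition suc2 :: "nat \<times> bool \<Rightarrow> nat \<times> bool" where
  "suc2 x = (if snd x then (e3, True) else (if fst x = d1 then (e1, True) else (e2, True)))"

lemma R2_cases:
  assumes "x \<in> R2"
  obtains "x = (d1, True)" | "x = (d2, True)" | "x = (d1, False)" | "x = (d2, False)"
  using assms unfolding R2_def by (cases x) (metis (full_types) SigmaE2 empty_iff insertE)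

lemma NT_pre: "x \<in> R2 \<Longrightarrow> (p, x) \<in> NT \<longleftrightarrow> p = pre2 x"
  by (erule R2_cases) (simp_all add: NT_def pre2_def dd)
lemma NT_suc: "x \<in> R2 \<Longrightarrow> (x, s) \<in> NT \<longleftrightarrow> s = suc2 x"
  by (erule R2_cases) (simp_all add: NT_def suc2_def dd)

lemma R2_inj: "x \<in> R2 \<Longrightarrow> x' \<in> R2 \<Longrightarrow> pre2 x = pre2 x' \<Longrightarrow> suc2 x = suc2 x' \<Longrightarrow> x = x'"
  by (erule R2_cases; erule R2_cases) (simp_all add: pre2_def suc2_def dd)

lemma R2_notA: "x \<in> R2 \<Longrightarrow> fst x \<notin> fE A"
  using a5 by (auto simp: R2_def)

lemma trB_R_pre: "x \<in> R2 \<Longrightarrow> tr B p x \<Longrightarrow> p = pre2 x"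
  using trB_char[of p x] R2_notA[of x] NT_pre[of x p] by (auto simp: tr_def)
lemma trB_R_suc: "x \<in> R2 \<Longrightarrow> tr B x s \<Longrightarrow> s = suc2 x"
  using trB_char[of x s] R2_notA[of x] NT_suc[of x s] by (auto simp: tr_def)

lemma pre_suc_notR: "x \<in> R2 \<Longrightarrow> pre2 x \<notin> R2 \<and> suc2 x \<notin> R2"
  by (erule R2_cases) (simp_all add: R2_def pre2_def suc2_def dd)

lemma phi_notR: "x \<notin> R2 \<Longrightarrow> phi2 x = x"
  by (cases x) (auto simp: phi2_def R2_def)

lemma psi_old: "m = Top \<or> m = Bot \<or> (\<exists>v\<in>fV A. m = Vtx v) \<Longrightarrow> psi2 m = m"
  using a4 by (auto simp: psi2_def)

lemma upA': "a \<in> fE A \<Longrightarrow> psi2 (fup A a) = fup A a" using upA psi_old by blast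
lemma loA': "a \<in> fE A \<Longrightarrow> psi2 (flo A a) = flo A a" using loA psi_old by blast

lemma psi_vals: "psi2 (Vtx g) = Vtx i" "psi2 (Vtx i1) = Vtx k" "psi2 (Vtx i2) = Vtx k"
  using dist_e by (auto simp: psi2_def)

lemma sim2: "sim A B phi2 psi2 R2"
proof
  show "finite (fE A)" by (rule finEA)
  show "finite (fE B)" using EB finEA by simp
  show "NC A" by (rule ncA)
  show "\<And>x. x \<in> OE B \<Longrightarrow> phi2 x \<in> OE A"
    using EB a2 by (auto simp: OE_def phi2_def)
  show "\<And>x y. tr B x y \<Longrightarrow> tr A (phi2 x) (phi2 y)"
  proof -
    fix x y assume t: "tr B x y"
    show "tr A (phi2 x) (phi2 y)"
    proof (cases "(x, y) \<in> NT")
      case True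
      then have "(phi2 x, phi2 y) \<in> OT" unfolding NT_def by (elim insertE emptyE) (simp_all add: OT_def phi2_def dd)
      then show ?thesis using OT_tr by fastforce
    next
      case False
      then have "tr A x y" using trB_char[OF t] by blast
      then have "phi2 x = x" "phi2 y = y" using a5 by (auto simp: phi2_def tr_def)
      then show ?thesis using \<open>tr A x y\<close> by simp
    qed
  qed
  show "\<And>x. x \<in> OE B \<Longrightarrow> src A (phi2 x) = psi2 (src B x) \<and> tgt A (phi2 x) = psi2 (tgt B x)"
  proof -
    fix x assume "x \<in> OE B"
    then obtain a d where x: "x = (a, d)" "a \<in> fE B" by (auto simp: OE_def)
    show "src A (phi2 x) = psi2 (src B x) \<and> tgt A (phi2 x) = psi2 (tgt B x)"
      using x(2)
    proof (cases rule: EB_cases)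
    qed (simp_all add: x phi2_def psi_vals loB_vals upB_vals loB_oth upB_oth upA' loA' a2 a3 dd)
  qed
  show "\<And>v. \<exists>u. psi2 (Vtx v) = Vtx u" by (auto simp: psi2_def)
  show "R2 \<subseteq> OE B" "R2 \<noteq> {}" using EB by (auto simp: R2_def OE_def)
  show "\<And>x. x \<in> R2 \<Longrightarrow> (\<exists>p. tr B p x) \<and> (\<exists>s. tr B x s)"
  proof -
    fix x assume "x \<in> R2"
    then have "tr B (pre2 x) x" "tr B x (suc2 x)"
      using trB_NT[of "(pre2 x, x)"] NT_pre[of x "pre2 x"] trB_NT[of "(x, suc2 x)"] NT_suc[of x "suc2 x"] by auto
    then show "(\<exists>p. tr B p x) \<and> (\<exists>s. tr B x s)" by blast
  qed
  show "\<And>x y. x \<in> OE B \<Longrightarrow> y \<in> OE B \<Longrightarrow> x \<noteq> y \<Longrightarrow> phi2 x = phi2 y \<Longrightarrow> x \<in> R2 \<and> y \<in> R2"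
    using EB_in by (auto simp: phi2_def R2_def OE_def split: if_splits)
  show "\<And>x x' p p' s s'. x \<in> R2 \<Longrightarrow> x' \<in> R2 \<Longrightarrow> phi2 x = phi2 x' \<Longrightarrow> tr B p x \<Longrightarrow> tr B p' x'
            \<Longrightarrow> tr B x s \<Longrightarrow> tr B x' s' \<Longrightarrow> phi2 p = phi2 p' \<Longrightarrow> phi2 s = phi2 s' \<Longrightarrow> x = x'"
  proof -
    fix x x' p p' s s'
    assume r: "x \<in> R2" "x' \<in> R2" and ph: "phi2 x = phi2 x'" and t: "tr B p x" "tr B p' x'" "tr B x s" "tr B x' s'"
      and ps: "phi2 p = phi2 p'" "phi2 s = phi2 s'"
    have "p = pre2 x" "p' = pre2 x'" "s = suc2 x" "s' = suc2 x'"
      using trB_R_pre trB_R_suc r t by auto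
    moreover have "phi2 (pre2 x) = pre2 x" "phi2 (suc2 x) = suc2 x" "phi2 (pre2 x') = pre2 x'" "phi2 (suc2 x') = suc2 x'"
      using pre_suc_notR[OF r(1)] pre_suc_notR[OF r(2)] phi_notR by auto
    ultimately have "pre2 x = pre2 x'" "suc2 x = suc2 x'" using ps by auto
    then show "x = x'" using r R2_inj by blast
  qed
  show "\<And>x y. x \<in> OE B \<Longrightarrow> x \<notin> R2 \<Longrightarrow> tr A y (phi2 x) \<Longrightarrow> \<exists>y'. tr B y' x"
  proof -
    fix x y assume x: "x \<in> OE B" "x \<notin> R2" and t: "tr A y (phi2 x)"
    have px: "phi2 x = x" using x phi_notR by auto
    show "\<exists>y'. tr B y' x"
    proof (cases "(y, x) \<in> OT")
      case True
      have "fst x \<noteq> e4" using x EB_in by (auto simp: OE_def)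
      then have "x \<in> {(e3,True),(e1,True),(e2,True)}" using True by (auto simp: OT_def)
      then show ?thesis
        using trB_NT[of "((d1,True),(e3,True))"] trB_NT[of "((d1,False),(e1,True))"]
          trB_NT[of "((d2,False),(e2,True))"]
        by (auto simp: NT_def dd)
    next
      case False
      then show ?thesis using trA_char[of y x] t px trB_old[of y x] by (cases y) auto
    qed
  qed
  show "\<And>x y. x \<in> OE B \<Longrightarrow> x \<notin> R2 \<Longrightarrow> tr A (phi2 x) y \<Longrightarrow> \<exists>y'. tr B x y'"
  proof -
    fix x y assume x: "x \<in> OE B" "x \<notin> R2" and t: "tr A (phi2 x) y"
    have px: "phi2 x = x" using x phi_notR by auto
    show "\<exists>y'. tr B x y'"
    proof (cases "(x, y) \<in> OT")
      case True
      have "fst x \<noteq> e4" using x EB_in by (auto simp: OE_def)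
      then have "x \<in> {(e3,False),(e1,False),(e2,False)}" using True by (auto simp: OT_def)
      then show ?thesis
        using trB_NT[of "((e3,False),(d1,False))"] trB_NT[of "((e1,False),(d1,True))"]
          trB_NT[of "((e2,False),(d2,True))"]
        by (auto simp: NT_def dd)
    next
      case False
      then show ?thesis using trA_char[of x y] t px trB_old[of x y] by (cases y) auto
    qed
  qed
  show "\<And>x y. tr B x y \<Longrightarrow> x \<notin> R2 \<Longrightarrow> y \<notin> R2 \<Longrightarrow> ttyp A (phi2 x) (phi2 y) = ttyp B x y"
  proof -
    fix x y assume t: "tr B x y" and nr: "x \<notin> R2" "y \<notin> R2"
    have "(x, y) \<notin> NT" using nr by (auto simp: NT_def R2_def)
    then have t2: "tr A x y" "tgt A x \<noteq> Vtx i" "tgt A x \<noteq> Vtx k" using trB_char[OF t] by auto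
    have px: "phi2 x = x" "phi2 y = y" using nr phi_notR by auto
    obtain v where v: "v \<in> fV A" "tgt A x = Vtx v" using t2 by (auto simp: tr_def)
    have vg: "v \<noteq> i" "v \<noteq> k" using v t2 by auto
    have fx: "fst x \<in> fE B" using t by (auto simp: tr_def)
    have "fst x \<noteq> e4" using fx EB_in by auto
    then have "tgt B x = Vtx v" using tgtB_old[OF fx v(1) vg] v t2 by (auto simp: tr_def)
    then show "ttyp A (phi2 x) (phi2 y) = ttyp B x y"
      using px v labB_old[OF v(1) vg] by (simp add: ttyp_def)
  qed
  show "\<And>x p s. x \<in> R2 \<Longrightarrow> tr B p x \<Longrightarrow> tr B x s \<Longrightarrow>
     p \<notin> R2 \<and> s \<notin> R2 \<and> ttyp B p x < ttyp B x s \<and> ttyp A (phi2 p) (phi2 x) = ttyp B x s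
     \<and> ttyp A (phi2 x) (phi2 s) = ttyp B p x"
  proof -
    fix x p s assume r: "x \<in> R2" and t: "tr B p x" "tr B x s"
    have ps: "p = pre2 x" "s = suc2 x" using trB_R_pre trB_R_suc r t by auto
    have nr: "p \<notin> R2" "s \<notin> R2" using pre_suc_notR[OF r] ps by auto
    have "ttyp B p x < ttyp B x s \<and> ttyp A (phi2 p) (phi2 x) = ttyp B x s
     \<and> ttyp A (phi2 x) (phi2 s) = ttyp B p x"
      unfolding ps using r
      by (elim R2_cases) (simp_all add: a1 a3 labB_new pre2_def suc2_def phi2_def ttyp_def loB_vals upB_vals dd)
    then show "p \<notin> R2 \<and> s \<notin> R2 \<and> ttyp B p x < ttyp B x s \<and> ttyp A (phi2 p) (phi2 x) = ttyp B x s
     \<and> ttyp A (phi2 x) (phi2 s) = ttyp B p x" using nr by blast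
  qed
qed



lemma VB_old: "v \<in> fV A \<Longrightarrow> v \<noteq> i \<Longrightarrow> v \<noteq> k \<Longrightarrow> v \<in> fV B" using VB by auto

lemma epB: "endpoints_ok B"
  unfolding endpoints_ok_def
proof
  fix a assume a: "a \<in> fE B"
  have old: "\<And>m. m = Top \<or> m = Bot \<or> (\<exists>v\<in>fV A. m = Vtx v) \<Longrightarrow> m \<noteq> Vtx i \<Longrightarrow> m \<noteq> Vtx k \<Longrightarrow>
     m = Top \<or> m = Bot \<or> m \<in> Vtx ` fV B" using VB_old by blast
  have nv: "Vtx g \<in> Vtx ` fV B" "Vtx i1 \<in> Vtx ` fV B" "Vtx i2 \<in> Vtx ` fV B"
    using labB_new by auto
  have look: "\<And>a. a \<in> fE A \<Longrightarrow> a \<noteq> e4 \<Longrightarrow> flo A a = Bot \<or> flo A a \<in> Vtx ` fV B"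
  proof -
    fix a assume "a \<in> fE A" "a \<noteq> e4"
    then have "flo A a \<noteq> Vtx i" "flo A a \<noteq> Vtx k" using inI' inK' by auto
    then show "flo A a = Bot \<or> flo A a \<in> Vtx ` fV B" using old[of "flo A a"] loA[OF \<open>a \<in> fE A\<close>] by auto
  qed
  show "fup B a \<in> {Top} \<union> Vtx ` fV B \<and> flo B a \<in> {Bot} \<union> Vtx ` fV B"
    using a
  proof (cases rule: EB_cases)
    case 3 then show ?thesis using nv look[of e1] a2 loB_vals upB_vals dd by auto
  next
    case 4 then show ?thesis using nv look[of e2] a2 loB_vals upB_vals dd by auto
  next
    case 5 then show ?thesis using nv look[of e3] a2 loB_vals upB_vals dd by auto
  next
    case 6
    have "fup A a \<noteq> Vtx i" "fup A a \<noteq> Vtx k"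
      using outI'[OF 6(1)] outK'[OF 6(1)] 6 by auto
    then show ?thesis using 6 old[of "fup A a"] look[of a] upA[OF 6(1)]
      loB_oth[OF 6(1)] upB_oth[OF 6(1)] by auto
  qed (use nv loB_vals upB_vals in auto)
qed

lemma set_old_lo: assumes "v \<in> fV A" "v \<noteq> i" "v \<noteq> k"
  shows "{a\<in>fE B. flo B a = Vtx v} = {a\<in>fE A. flo A a = Vtx v}"
proof (intro set_eqI iffI)
  fix a assume "a \<in> {a\<in>fE B. flo B a = Vtx v}" then show "a \<in> {a\<in>fE A. flo A a = Vtx v}"
    using loB_old[of a v] assms by auto
next
  fix a assume a: "a \<in> {a\<in>fE A. flo A a = Vtx v}"
  then have "a \<noteq> e4" using a3 assms by auto
  then have "a \<in> fE B" using a EB by auto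
  then show "a \<in> {a\<in>fE B. flo B a = Vtx v}" using loB_old[of a v] assms a \<open>a \<noteq> e4\<close> by auto
qed
lemma set_old_up: assumes "v \<in> fV A" "v \<noteq> i" "v \<noteq> k"
  shows "{a\<in>fE B. fup B a = Vtx v} = {a\<in>fE A. fup A a = Vtx v}"
proof (intro set_eqI iffI)
  fix a assume "a \<in> {a\<in>fE B. fup B a = Vtx v}" then show "a \<in> {a\<in>fE A. fup A a = Vtx v}"
    using upB_old[of a v] assms by auto
next
  fix a assume a: "a \<in> {a\<in>fE A. fup A a = Vtx v}"
  then have "a \<noteq> e4" using a3 assms by auto
  then have "a \<in> fE B" using a EB by auto
  then show "a \<in> {a\<in>fE B. fup B a = Vtx v}" using upB_old[of a v] assms a \<open>a \<noteq> e4\<close> by auto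
qed

lemma cardsB: "cards B"
  unfolding cards_def
proof
  fix v assume v: "v \<in> fV B"
  consider "v \<in> fV A" "v \<noteq> i" "v \<noteq> k" | "v = g" | "v = i1" | "v = i2" using v VB by auto
  then show "card {e\<in>fE B. flo B e = Vtx v} = upper_count (flab B v) \<and> card {e\<in>fE B. fup B e = Vtx v} = lower_count (flab B v)"
  proof cases
    case 1
    then show ?thesis using set_old_lo[OF 1] set_old_up[OF 1] labB_old[OF 1] cardsA unfolding cards_def by auto
  next
    case 2
    have h1: "{a\<in>fE B. flo B a = Vtx v} = {d1, d2}" and h2: "{a\<in>fE B. fup B a = Vtx v} = {e3}"
      using 2 loB_g upB_g EB_in by auto
    show ?thesis unfolding h1 h2 using 2 labB_new dd by simp
  next
    case 3
    have h1: "{a\<in>fE B. flo B a = Vtx v} = {}" and h2: "{a\<in>fE B. fup B a = Vtx v} = {e1, d1}"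
      using 3 loB_i1 upB_i1 EB_in by auto
    show ?thesis unfolding h1 h2 using 3 labB_new dd by simp
  next
    case 4
    have h1: "{a\<in>fE B. flo B a = Vtx v} = {}" and h2: "{a\<in>fE B. fup B a = Vtx v} = {e2, d2}"
      using 4 loB_i2 upB_i2 EB_in by auto
    show ?thesis unfolding h1 h2 using 4 labB_new dd by simp
  qed
qed

lemma main2: "Inv B \<and> M B < M A"
proof -
  interpret S: sim A B phi2 psi2 R2 by (rule sim2)
  have "finite (fV B)" using VB finVA by simp
  moreover have "finite (fE B)" using EB finEA by simp
  ultimately show ?thesis using S.ncB S.M_less epB cardsB by (simp add: Inv_def)
qed

end

lemma c2_main: "c2_step A B \<Longrightarrow> Inv A \<Longrightarrow> Inv B \<and> M B < M A"
  unfolding c2_step_def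
  apply (elim exE conjE)
  subgoal premises p for i k e1 e2 e3 e4 g i1 i2 d1 d2
  proof -
    interpret c2 A B i k e1 e2 e3 e4 g i1 i2 d1 d2
      by (unfold_locales) (use p in auto)
    show ?thesis by (rule main2)
  qed
  done


lemma Inv_start: "atomic_flow A \<Longrightarrow> cycle_free A \<Longrightarrow> Inv A"
proof -
  assume a: "atomic_flow A" "cycle_free A"
  have ep: "endpoints_ok A" using a(1) by (simp add: atomic_flow_def endpoints_ok_def)
  have "cards A" using a(1) by (simp add: atomic_flow_def cards_def)
  moreover have "NC A" using cycle_free_NC[OF a(2) ep] .
  ultimately show "Inv A" using a(1) ep by (simp add: atomic_flow_def Inv_def)
qed

lemma c_main: "c_step A B \<Longrightarrow> Inv A \<Longrightarrow> Inv B \<and> M B < M A"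
  unfolding c_step_def using c1_main c2_main c3_main by blast

theorem theorem4p22:
  assumes "atomic_flow A" and "cycle_free A"
  shows "\<not> (\<exists>f :: nat \<Rightarrow> flow. f 0 = A \<and> (\<forall>i. c_step (f i) (f (Suc i))))"
proof
  assume "\<exists>f :: nat \<Rightarrow> flow. f 0 = A \<and> (\<forall>i. c_step (f i) (f (Suc i)))"
  then obtain f :: "nat \<Rightarrow> flow" where f: "f 0 = A" "\<And>i. c_step (f i) (f (Suc i))" by blast
  have I: "\<And>i. Inv (f i)"
  proof -
    fix i show "Inv (f i)"
    proof (induction i)
      case 0 then show ?case using Inv_start[OF assms] f(1) by simp
    next
      case (Suc i) then show ?case using c_main[OF f(2)] by blast
    qed
  qed
  have D: "\<And>i. M (f (Suc i)) < M (f i)" using c_main[OF f(2) I] by blast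
  have "\<And>i. M (f i) + i \<le> M (f 0)"
  proof -
    fix i show "M (f i) + i \<le> M (f 0)"
    proof (induction i)
      case 0 then show ?case by simp
    next
      case (Suc i) then show ?case using D[of i] by simp
    qed
  qed
  from this[of "Suc (M (f 0))"] show False by simp
qed

end
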